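(* Let $G$ be a finite loopless graph (parallel edges allowed). The restriction maps $\mathrm{Short}(C_1(G;\mathbb{Z}))\to\mathrm{Short}(\mathcal{C}(G))$ and $\mathrm{Short}(C_1(G;\mathbb{Z}))\to\mathrm{Short}(\mathcal{F}(G))$ are surjective, and the inclusion $\mathcal{C}(G)\oplus\mathcal{F}(G)\subset C_1(G;\mathbb{Z})$ induces a natural isomorphism $\varphi:(C(\mathcal{C}(G)),d_{\mathcal{C}})\to(C(\mathcal{F}(G)),-d_{\mathcal{F}})$.
   Context: Fix an orientation of $G=(V,E)$; $C_1(G;\mathbb{Z})$ is the free abelian group on $E$ with $E$ orthonormal, $\partial e=v-w$ for $e$ from $w$ to $v$, $\partial^*$ the adjoint; $\mathcal{C}(G)=\mathrm{im}(\partial^* )\cap C_1(G;\mathbb{Z})$ and $\mathcal{F}(G)=\ker(\partial)\cap C_1(G;\mathbb{Z})$. For an integral positive definite lattice $\Lambda$ of rank $m$: $\Lambda^*=\{x\in\Lambda\otimes\mathbb{Q}:\langle x,y\rangle\in\mathbb{Z}\ \forall y\}$, $\overline{\Lambda}=\Lambda^*/\Lambda$, $\mathrm{Char}(\Lambda)=\{\chi\in\Lambda^*:\langle\chi,y\rangle\equiv\langle y,y\rangle\pmod2\ \forall y\}$, $C(\Lambda)=\mathrm{Char}(\Lambda)/2\Lambda$ (a torsor over $2\Lambda^*/2\Lambda\cong\overline{\Lambda}$), $d([\chi])=\min\{(\langle\chi',\chi'\rangle-m)/4:\chi'\in[\chi]\}$, $\mathrm{Short}(\Lambda)$ the characteristic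 covectors of minimal norm in their class. Restriction maps are restriction of functionals. An isomorphism $(C(\Lambda_1),f_1)\to(C(\Lambda_2),f_2)$ is a bijection $\varphi$ and group isomorphism $\overline{\Lambda}_1\to\overline{\Lambda}_2$ with $f_2\circ\varphi=f_1$ and $\varphi(c)-\varphi(c')=\varphi(c-c')$. *)

theory Defs
  imports Complex_Main "HOL-Algebra.Group"
begin

text \<open>Vectors in the rational vector space with basis E are functions 'e => rat
  vanishing outside E; the standard inner product makes E orthonormal.\<close>

definition ip :: "'e set \<Rightarrow> ('e \<Rightarrow> rat) \<Rightarrow> ('e \<Rightarrow> rat) \<Rightarrow> rat" where
  "ip E x y = (\<Sum>e\<in>E. x e * y e)"

definition zchains :: "'e set \<Rightarrow> ('e \<Rightarrow> rat) set" where
  "zchains E = {x. (\<forall>e\<in>E. x e \<in> \<int>) \<and> (\<forall>e. e \<notin> E \<longrightarrow> x e = 0)}"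

definition bdry :: "'e set \<Rightarrow> ('e \<Rightarrow> 'v) \<Rightarrow> ('e \<Rightarrow> 'v) \<Rightarrow> ('e \<Rightarrow> rat) \<Rightarrow> 'v \<Rightarrow> rat" where
  "bdry E src tgt x v =
     (\<Sum>e\<in>E. (if tgt e = v then x e else 0) - (if src e = v then x e else 0))"

definition cobdry :: "'e set \<Rightarrow> ('e \<Rightarrow> 'v) \<Rightarrow> ('e \<Rightarrow> 'v) \<Rightarrow> ('v \<Rightarrow> rat) \<Rightarrow> 'e \<Rightarrow> rat" where
  "cobdry E src tgt f e = (if e \<in> E then f (tgt e) - f (src e) else 0)"

definition cut_lattice :: "'v set \<Rightarrow> 'e set \<Rightarrow> ('e \<Rightarrow> 'v) \<Rightarrow> ('e \<Rightarrow> 'v) \<Rightarrow> ('e \<Rightarrow> rat) set" where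
  "cut_lattice V E src tgt =
     {x \<in> zchains E. \<exists>f. (\<forall>v. v \<notin> V \<longrightarrow> f v = 0) \<and> x = cobdry E src tgt f}"

definition flow_lattice :: "'v set \<Rightarrow> 'e set \<Rightarrow> ('e \<Rightarrow> 'v) \<Rightarrow> ('e \<Rightarrow> 'v) \<Rightarrow> ('e \<Rightarrow> rat) set" where
  "flow_lattice V E src tgt = {x \<in> zchains E. \<forall>v\<in>V. bdry E src tgt x v = 0}"

definition qspan :: "('e \<Rightarrow> rat) set \<Rightarrow> ('e \<Rightarrow> rat) set" where
  "qspan L = {x. \<exists>S c. finite S \<and> S \<subseteq> L \<and> x = (\<lambda>e. \<Sum>l\<in>S. c l * l e)}"

definition qindep :: "('e \<Rightarrow> rat) set \<Rightarrow> bool" where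
  "qindep S \<longleftrightarrow> (\<forall>c. (\<forall>e. (\<Sum>l\<in>S. c l * l e) = 0) \<longrightarrow> (\<forall>l\<in>S. c l = 0))"

definition lat_rank :: "('e \<Rightarrow> rat) set \<Rightarrow> nat" where
  "lat_rank L = Max {card S | S. finite S \<and> S \<subseteq> L \<and> qindep S}"

definition dual_lat :: "'e set \<Rightarrow> ('e \<Rightarrow> rat) set \<Rightarrow> ('e \<Rightarrow> rat) set" where
  "dual_lat E L = {x \<in> qspan L. \<forall>y\<in>L. ip E x y \<in> \<int>}"

definition char_cov :: "'e set \<Rightarrow> ('e \<Rightarrow> rat) set \<Rightarrow> ('e \<Rightarrow> rat) set" where
  "char_cov E L = {\<chi> \<in> dual_lat E L. \<forall>y\<in>L. \<exists>k::int. ip E \<chi> y - ip E y y = 2 * of_int k}"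

definition char_class :: "('e \<Rightarrow> rat) set \<Rightarrow> ('e \<Rightarrow> rat) \<Rightarrow> ('e \<Rightarrow> rat) set" where
  "char_class L \<chi> = {(\<lambda>e. \<chi> e + 2 * y e) | y. y \<in> L}"

definition char_classes :: "'e set \<Rightarrow> ('e \<Rightarrow> rat) set \<Rightarrow> ('e \<Rightarrow> rat) set set" where
  "char_classes E L = char_class L ` char_cov E L"

text \<open>d([chi]) = min over the class of (norm - rank)/4 (the minimum is attained,
  so it equals the infimum used here).\<close>
definition dinv :: "'e set \<Rightarrow> ('e \<Rightarrow> rat) set \<Rightarrow> ('e \<Rightarrow> rat) set \<Rightarrow> real" where
  "dinv E L c = (Inf {real_of_rat (ip E \<chi> \<chi>) | \<chi>. \<chi> \<in> c} - real (lat_rank L)) / 4"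

definition short_cov :: "'e set \<Rightarrow> ('e \<Rightarrow> rat) set \<Rightarrow> ('e \<Rightarrow> rat) set" where
  "short_cov E L = {\<chi> \<in> char_cov E L. \<forall>\<chi>'\<in>char_class L \<chi>. ip E \<chi> \<chi> \<le> ip E \<chi>' \<chi>'}"

definition dcoset :: "('e \<Rightarrow> rat) set \<Rightarrow> ('e \<Rightarrow> rat) \<Rightarrow> ('e \<Rightarrow> rat) set" where
  "dcoset L x = {(\<lambda>e. x e + y e) | y. y \<in> L}"

definition disc_group :: "'e set \<Rightarrow> ('e \<Rightarrow> rat) set \<Rightarrow> ('e \<Rightarrow> rat) set monoid" where
  "disc_group E L =
    \<lparr>carrier = dcoset L ` dual_lat E L,
     monoid.mult = (\<lambda>A B. {(\<lambda>e. a e + b e) | a b. a \<in> A \<and> b \<in> B}),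
     one = L\<rparr>"

text \<open>Torsor difference c - c' in 2Lambda^*/2Lambda, identified with Lambda^*/Lambda
  via division by 2.\<close>
definition tdiff :: "('e \<Rightarrow> rat) set \<Rightarrow> ('e \<Rightarrow> rat) set \<Rightarrow> ('e \<Rightarrow> rat) set \<Rightarrow> ('e \<Rightarrow> rat) set" where
  "tdiff L c c' = dcoset L (\<lambda>e. ((SOME \<chi>. \<chi> \<in> c) e - (SOME \<chi>. \<chi> \<in> c') e) / 2)"

text \<open>Restriction of the functional ip x to Lambda, as an element of Lambda^* in Lambda tensor Q.\<close>
definition restr :: "'e set \<Rightarrow> ('e \<Rightarrow> rat) set \<Rightarrow> ('e \<Rightarrow> rat) \<Rightarrow> ('e \<Rightarrow> rat)" where
  "restr E L x = (THE r. r \<in> qspan L \<and> (\<forall>y\<in>L. ip E r y = ip E x y))"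

end

theory Submission
  imports Defs "HOL-Library.Function_Algebras"
begin



definition sc :: "rat \<Rightarrow> ('e \<Rightarrow> rat) \<Rightarrow> 'e \<Rightarrow> rat" where
  "sc c f = (\<lambda>e. c * f e)"

lemma sc_apply[simp]: "sc c f e = c * f e" by (simp add: sc_def)

interpretation qv: vector_space "sc :: rat \<Rightarrow> ('e \<Rightarrow> rat) \<Rightarrow> 'e \<Rightarrow> rat"
  by unfold_locales (auto simp: sc_def fun_eq_iff algebra_simps)

lemma sum_fun_apply: "(\<Sum>a\<in>A. f a) e = (\<Sum>a\<in>A. f a e)"
  by (induction A rule: infinite_finite_induct) auto

lemma qspan_eq: "qspan L = qv.span L"
  unfolding qspan_def qv.span_explicit
  by (auto simp: fun_eq_iff sum_fun_apply)

lemma qindep_eq: "finite S \<Longrightarrow> qindep S \<longleftrightarrow> qv.independent S"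
  unfolding qindep_def using qv.dependent_finite[of S]
  by (auto simp: fun_eq_iff sum_fun_apply)




definition supp :: "'e set \<Rightarrow> ('e \<Rightarrow> rat) set" where
  "supp E = {x. \<forall>e. e \<notin> E \<longrightarrow> x e = 0}"

lemma ip_add1: "ip E (x + y) z = ip E x z + ip E y z"
  by (simp add: ip_def sum.distrib algebra_simps)
lemma ip_add2: "ip E z (x + y) = ip E z x + ip E z y"
  by (simp add: ip_def sum.distrib algebra_simps)
lemma ip_diff1: "ip E (x - y) z = ip E x z - ip E y z"
  by (simp add: ip_def sum_subtractf algebra_simps)
lemma ip_diff2: "ip E z (x - y) = ip E z x - ip E z y"
  by (simp add: ip_def sum_subtractf algebra_simps)
lemma ip_neg1: "ip E (- x) z = - ip E x z"
  by (simp add: ip_def sum_negf)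
lemma ip_neg2: "ip E z (- x) = - ip E z x"
  by (simp add: ip_def sum_negf)
lemma ip_sc1: "ip E (sc c x) z = c * ip E x z"
  by (simp add: ip_def sum_distrib_left algebra_simps)
lemma ip_sc2: "ip E z (sc c x) = c * ip E z x"
  by (simp add: ip_def sum_distrib_left algebra_simps)
lemma ip_zero1[simp]: "ip E 0 z = 0" by (simp add: ip_def)
lemma ip_zero2[simp]: "ip E z 0 = 0" by (simp add: ip_def)
lemma ip_sym: "ip E x y = ip E y x"
  by (simp add: ip_def mult.commute)
lemma ip_nonneg: "ip E x x \<ge> 0"
  by (simp add: ip_def sum_nonneg)

lemma ip_zero_imp: assumes "finite E" "ip E x x = 0" "e \<in> E" shows "x e = 0"
proof -
  have "\<forall>e\<in>E. x e * x e = 0"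
    using assms sum_nonneg_eq_0_iff[of E "\<lambda>e. x e * x e"] by (simp add: ip_def)
  thus ?thesis using assms by simp
qed

lemma ip_zero_supp: assumes "finite E" "ip E x x = 0" "x \<in> supp E" shows "x = 0"
  using ip_zero_imp[OF assms(1,2)] assms(3) by (auto simp: supp_def fun_eq_iff)

lemma orth_span:
  assumes "\<forall>y\<in>L. ip E x y = 0" "y \<in> qv.span L" shows "ip E x y = 0"
  using assms(2)
proof (induction rule: qv.span_induct_alt)
  case base then show ?case by (simp add: ip_def)
next
  case (step c a b)
  have "ip E x (sc c a + b) = c * ip E x a + ip E x b" by (simp only: ip_add2 ip_sc2)
  also have "\<dots> = 0" using assms(1) step by simp
  finally show ?case .
qed

lemma supp_subspace: "qv.subspace (supp E)"
  by (auto simp: qv.subspace_def supp_def)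

lemma span_supp: "L \<subseteq> supp E \<Longrightarrow> qv.span L \<subseteq> supp E"
  using qv.span_minimal[OF _ supp_subspace] by blast

lemma zchains_supp: "zchains E \<subseteq> supp E"
  by (auto simp: zchains_def supp_def)

locale plat =
  fixes E :: "'e set" and L :: "('e \<Rightarrow> rat) set"
  assumes finE: "finite E"
    and Lz: "L \<subseteq> zchains E"
    and L0: "0 \<in> L"
    and Ladd: "\<And>x y. x \<in> L \<Longrightarrow> y \<in> L \<Longrightarrow> x + y \<in> L"
    and Lneg: "\<And>x. x \<in> L \<Longrightarrow> - x \<in> L"
    and proj_ex: "\<And>x. \<exists>r\<in>qv.span L. \<forall>y\<in>L. ip E r y = ip E x y"
begin

lemma Lsupp: "L \<subseteq> supp E" using Lz zchains_supp by blast
lemma spanL_supp: "qv.span L \<subseteq> supp E" using span_supp[OF Lsupp] .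

lemma Ldiff: "x \<in> L \<Longrightarrow> y \<in> L \<Longrightarrow> x - y \<in> L"
  using Ladd Lneg by (metis diff_conv_add_uminus)

lemma ip_span_ext:
  assumes "\<forall>y\<in>L. ip E r y = ip E x y" "z \<in> qv.span L" shows "ip E r z = ip E x z"
proof -
  have "\<forall>y\<in>L. ip E (r - x) y = 0" using assms(1) by (simp add: ip_diff1)
  from orth_span[OF this assms(2)] show ?thesis by (simp add: ip_diff1)
qed

lemma proj_unique:
  assumes "r1 \<in> qv.span L" "\<forall>y\<in>L. ip E r1 y = ip E x y"
    "r2 \<in> qv.span L" "\<forall>y\<in>L. ip E r2 y = ip E x y"
  shows "r1 = r2"
proof -
  have d: "r1 - r2 \<in> qv.span L" using assms by (simp add: qv.span_diff)
  have "\<forall>y\<in>L. ip E (r1 - r2) y = 0" using assms by (simp add: ip_diff1)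
  from orth_span[OF this d] have "ip E (r1 - r2) (r1 - r2) = 0" .
  moreover have "r1 - r2 \<in> supp E" using d spanL_supp by blast
  ultimately show ?thesis using ip_zero_supp[OF finE] by fastforce
qed

lemma R_props: "restr E L x \<in> qv.span L \<and> (\<forall>y\<in>L. ip E (restr E L x) y = ip E x y)"
proof -
  obtain r where r: "r \<in> qv.span L" "\<forall>y\<in>L. ip E r y = ip E x y" using proj_ex by blast
  have "\<exists>!r. r \<in> qspan L \<and> (\<forall>y\<in>L. ip E r y = ip E x y)"
    using r proj_unique unfolding qspan_eq by blast
  then show ?thesis unfolding restr_def qspan_eq[symmetric] by (rule theI')
qed

lemma R_span: "restr E L x \<in> qv.span L" using R_props by blast
lemma R_ip: "y \<in> L \<Longrightarrow> ip E (restr E L x) y = ip E x y" using R_props by blast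
lemma R_ip_span: "y \<in> qv.span L \<Longrightarrow> ip E (restr E L x) y = ip E x y"
  using ip_span_ext R_props by blast
lemma R_supp: "restr E L x \<in> supp E" using R_span spanL_supp by blast

lemma R_eq: "r \<in> qv.span L \<Longrightarrow> \<forall>y\<in>L. ip E r y = ip E x y \<Longrightarrow> restr E L x = r"
  using proj_unique R_props by blast

lemma R_id: "x \<in> qv.span L \<Longrightarrow> restr E L x = x"
  by (rule R_eq) auto

lemma R_add: "restr E L (x + y) = restr E L x + restr E L y"
  by (rule R_eq) (auto simp: qv.span_add R_span ip_add1 R_ip)
lemma R_diff: "restr E L (x - y) = restr E L x - restr E L y"
  by (rule R_eq) (auto simp: qv.span_diff R_span ip_diff1 R_ip)
lemma R_sc: "restr E L (sc c x) = sc c (restr E L x)"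
  by (rule R_eq) (auto simp: qv.span_scale R_span ip_sc1 R_ip)
lemma R_zero: "restr E L 0 = 0"
  by (rule R_eq) (auto simp: qv.span_zero)

end




definition evenq :: "rat \<Rightarrow> bool" where "evenq q \<longleftrightarrow> (\<exists>k::int. q = 2 * of_int k)"

definition oddv :: "'e set \<Rightarrow> ('e \<Rightarrow> rat) \<Rightarrow> bool" where
  "oddv E x \<longleftrightarrow> x \<in> supp E \<and> (\<forall>e\<in>E. \<exists>k::int. x e = 2 * of_int k + 1)"

definition pm1 :: "'e set \<Rightarrow> ('e \<Rightarrow> rat) \<Rightarrow> bool" where
  "pm1 E x \<longleftrightarrow> x \<in> supp E \<and> (\<forall>e\<in>E. x e = 1 \<or> x e = -1)"

lemma evenq_add: assumes "evenq a" "evenq b" shows "evenq (a + b)"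
proof -
  obtain k l where "a = 2 * of_int k" "b = 2 * of_int l" using assms by (auto simp: evenq_def)
  then have "a + b = 2 * of_int (k + l)" by simp
  then show ?thesis unfolding evenq_def by blast
qed
lemma evenq_diff: assumes "evenq a" "evenq b" shows "evenq (a - b)"
proof -
  obtain k l where "a = 2 * of_int k" "b = 2 * of_int l" using assms by (auto simp: evenq_def)
  then have "a - b = 2 * of_int (k - l)" by simp
  then show ?thesis unfolding evenq_def by blast
qed
lemma evenq_0[simp]: "evenq 0" unfolding evenq_def by (rule exI[of _ 0]) simp
lemma evenq_sum: "(\<And>e. e \<in> A \<Longrightarrow> evenq (f e)) \<Longrightarrow> evenq (\<Sum>e\<in>A. f e)"
  by (induction A rule: infinite_finite_induct) (auto intro: evenq_add)
lemma evenq_2int: "a \<in> \<int> \<Longrightarrow> evenq (2 * a)"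
  unfolding evenq_def by (auto elim: Ints_cases)

lemma pm1_oddv: assumes "pm1 E x" shows "oddv E x"
proof -
  have "\<exists>k::int. x e = 2 * of_int k + 1" if "e \<in> E" for e
  proof -
    from assms that have "x e = 1 \<or> x e = -1" by (auto simp: pm1_def)
    then show ?thesis
    proof
      assume "x e = 1" then show ?thesis by (intro exI[of _ 0]) simp
    next
      assume "x e = -1" then show ?thesis by (intro exI[of _ "-1"]) simp
    qed
  qed
  then show ?thesis using assms by (auto simp: oddv_def pm1_def)
qed

lemma oddv_zchains: "oddv E x \<Longrightarrow> x \<in> zchains E"
  unfolding oddv_def zchains_def supp_def by force

lemma ip_Ints: "x \<in> zchains E \<Longrightarrow> y \<in> zchains E \<Longrightarrow> ip E x y \<in> \<int>"
  unfolding ip_def zchains_def by (auto intro!: Ints_sum Ints_mult)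

lemma odd_term_even:
  assumes "c = 2 * of_int k + 1" "m \<in> \<int>" shows "evenq (c * m - m * m)"
proof -
  obtain n where n: "m = of_int n" using assms(2) by (auto elim: Ints_cases)
  have "even (n * n - n)" by simp
  then obtain j where j: "n * n - n = 2 * j" by (metis evenE)
  have i: "(2*k+1)*n - n*n = 2*(k*n - j)" using j by (simp add: algebra_simps)
  have "c * m - m * m = of_int ((2*k+1)*n - n*n)" unfolding assms(1) n by simp
  also have "\<dots> = 2 * of_int (k * n - j)" unfolding i by simp
  finally have "c * m - m * m = 2 * of_int (k * n - j)" .
  then show ?thesis unfolding evenq_def by blast
qed

lemma oddv_char_parity:
  assumes "oddv E x" "y \<in> zchains E" shows "evenq (ip E x y - ip E y y)"
proof -
  have "ip E x y - ip E y y = (\<Sum>e\<in>E. x e * y e - y e * y e)"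
    by (simp add: ip_def sum_subtractf)
  also have "evenq \<dots>"
  proof (rule evenq_sum)
    fix e assume e: "e \<in> E"
    then obtain k where "x e = 2 * of_int k + 1" using assms(1) by (auto simp: oddv_def)
    moreover have "y e \<in> \<int>" using assms(2) e by (auto simp: zchains_def)
    ultimately show "evenq (x e * y e - y e * y e)" by (rule odd_term_even)
  qed
  finally show ?thesis .
qed

lemma int_sq_pm: "(m::rat) \<in> \<int> \<Longrightarrow> 0 \<le> m * m + m \<and> 0 \<le> m * m - m"
proof -
  assume "m \<in> \<int>" then obtain n where n: "m = of_int n" by (auto elim: Ints_cases)
  have a: "0 \<le> n * (n + 1)" by (cases "n \<ge> 0") (auto simp: zero_le_mult_iff)
  have b: "0 \<le> n * (n - 1)" by (cases "n \<ge> 1") (auto simp: zero_le_mult_iff)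
  have "0 \<le> n * n + n \<and> 0 \<le> n * n - n" using a b by (simp add: algebra_simps)
  then have "(0::rat) \<le> of_int (n * n + n)" "(0::rat) \<le> of_int (n * n - n)"
    by (simp_all only: of_int_0_le_iff)
  moreover have "m * m + m = of_int (n * n + n)" "m * m - m = of_int (n * n - n)" by (simp_all add: n)
  ultimately show ?thesis by linarith
qed

context plat
begin

lemma R_char: assumes "oddv E x" shows "restr E L x \<in> char_cov E L"
proof -
  have xz: "x \<in> zchains E" using oddv_zchains[OF assms] .
  have "restr E L x \<in> dual_lat E L"
    unfolding dual_lat_def qspan_eq using R_span R_ip ip_Ints[OF xz] Lz by auto
  moreover have "\<exists>k::int. ip E (restr E L x) y - ip E y y = 2 * of_int k" if "y \<in> L" for y
    using oddv_char_parity[OF assms, of y] that Lz R_ip[OF that] by (auto simp: evenq_def)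
  ultimately show ?thesis unfolding char_cov_def by blast
qed

lemma class_norm:
  "ip E (\<lambda>e. a e + 2 * y e) (\<lambda>e. a e + 2 * y e) = ip E a a + 4 * (ip E a y + ip E y y)"
  by (simp add: ip_def sum.distrib sum_distrib_left algebra_simps)

lemma R_short: assumes "pm1 E x" shows "restr E L x \<in> short_cov E L"
proof -
  have ch: "restr E L x \<in> char_cov E L" using R_char pm1_oddv[OF assms] by blast
  have "ip E (restr E L x) (restr E L x) \<le> ip E c c" if cin: "c \<in> char_class L (restr E L x)" for c
  proof -
    obtain y where y: "y \<in> L" "c = (\<lambda>e. restr E L x e + 2 * y e)"
      using cin unfolding char_class_def by blast
    have "ip E x y + ip E y y = (\<Sum>e\<in>E. y e * y e + x e * y e)"
      by (simp add: ip_def sum.distrib algebra_simps)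
    also have "\<dots> \<ge> 0"
    proof (rule sum_nonneg)
      fix e assume e: "e \<in> E"
      have "y e \<in> \<int>" using y Lz e by (auto simp: zchains_def)
      from int_sq_pm[OF this] show "0 \<le> y e * y e + x e * y e"
        using assms e by (auto simp: pm1_def)
    qed
    finally show ?thesis using y class_norm R_ip[OF y(1)] by simp
  qed
  then show ?thesis using ch by (auto simp: short_cov_def)
qed

lemma class_shift:
  assumes "y \<in> L" shows "char_class L (\<lambda>e. a e + 2 * y e) = char_class L a"
proof (intro equalityI subsetI)
  fix c assume "c \<in> char_class L (\<lambda>e. a e + 2 * y e)"
  then obtain z where z: "z \<in> L" "c = (\<lambda>e. (a e + 2 * y e) + 2 * z e)"
    unfolding char_class_def by blast
  then have "c = (\<lambda>e. a e + 2 * (y + z) e)" by (simp add: algebra_simps)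
  moreover have "y + z \<in> L" using Ladd[OF assms z(1)] .
  ultimately show "c \<in> char_class L a" unfolding char_class_def by blast
next
  fix c assume "c \<in> char_class L a"
  then obtain z where z: "z \<in> L" "c = (\<lambda>e. a e + 2 * z e)"
    unfolding char_class_def by blast
  then have "c = (\<lambda>e. (a e + 2 * y e) + 2 * (z - y) e)" by (simp add: algebra_simps)
  moreover have "z - y \<in> L" using Ldiff[OF z(1) assms] .
  ultimately show "c \<in> char_class L (\<lambda>e. a e + 2 * y e)" unfolding char_class_def by blast
qed

lemma class_mem: "a \<in> char_class L a"
  unfolding char_class_def using L0 by (auto intro!: exI[of _ 0])

lemma class_eqD: "char_class L a = char_class L b \<Longrightarrow> \<exists>y\<in>L. a = (\<lambda>e. b e + 2 * y e)"
  using class_mem[of a] unfolding char_class_def by auto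

lemma class_mem_eq: assumes "c \<in> char_class L a" shows "char_class L c = char_class L a"
proof -
  obtain y where "y \<in> L" "c = (\<lambda>e. a e + 2 * y e)" using assms unfolding char_class_def by blast
  then show ?thesis using class_shift by simp
qed

lemma dcoset_shift:
  assumes "y \<in> L" shows "dcoset L (\<lambda>e. a e + y e) = dcoset L a"
proof (intro equalityI subsetI)
  fix c assume "c \<in> dcoset L (\<lambda>e. a e + y e)"
  then obtain z where z: "z \<in> L" "c = (\<lambda>e. (a e + y e) + z e)"
    unfolding dcoset_def by blast
  then have "c = (\<lambda>e. a e + (y + z) e)" by (simp add: algebra_simps)
  moreover have "y + z \<in> L" using Ladd[OF assms z(1)] .
  ultimately show "c \<in> dcoset L a" unfolding dcoset_def by blast
next
  fix c assume "c \<in> dcoset L a"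
  then obtain z where z: "z \<in> L" "c = (\<lambda>e. a e + z e)"
    unfolding dcoset_def by blast
  then have "c = (\<lambda>e. (a e + y e) + (z - y) e)" by (simp add: algebra_simps)
  moreover have "z - y \<in> L" using Ldiff[OF z(1) assms] .
  ultimately show "c \<in> dcoset L (\<lambda>e. a e + y e)" unfolding dcoset_def by blast
qed

lemma dcoset_mem: "a \<in> dcoset L a"
  unfolding dcoset_def using L0 by (auto intro!: exI[of _ 0])

lemma dcoset_eqD: "dcoset L a = dcoset L b \<Longrightarrow> \<exists>y\<in>L. a = (\<lambda>e. b e + y e)"
  using dcoset_mem[of a] unfolding dcoset_def by auto

lemma dcoset_mem_eq: assumes "c \<in> dcoset L a" shows "dcoset L c = dcoset L a"
proof -
  obtain y where "y \<in> L" "c = (\<lambda>e. a e + y e)" using assms unfolding dcoset_def by blast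
  then show ?thesis using dcoset_shift by simp
qed

end




context plat
begin

lemma class_fun: "(\<lambda>e. a e + 2 * y e) = a + sc 2 y"
  by (simp add: fun_eq_iff)

lemma class_char:
  assumes xi: "\<xi> \<in> char_cov E L" and y: "y \<in> L"
  shows "(\<lambda>e. \<xi> e + 2 * y e) \<in> char_cov E L"
proof -
  have xs: "\<xi> \<in> qv.span L" and xint: "\<forall>z\<in>L. ip E \<xi> z \<in> \<int>"
    and xp: "\<forall>z\<in>L. \<exists>k::int. ip E \<xi> z - ip E z z = 2 * of_int k"
    using xi unfolding char_cov_def dual_lat_def qspan_eq by auto
  have sp: "\<xi> + sc 2 y \<in> qv.span L"
    using qv.span_add[OF xs qv.span_scale[OF qv.span_base[OF y]]] .
  have yz: "z \<in> L \<Longrightarrow> ip E y z \<in> \<int>" for z using ip_Ints y Lz by blast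
  have ipc: "ip E (\<xi> + sc 2 y) z = ip E \<xi> z + 2 * ip E y z" for z
    by (simp only: ip_add1 ip_sc1)
  have "ip E (\<xi> + sc 2 y) z \<in> \<int>" if "z \<in> L" for z
    unfolding ipc using xint yz that by auto
  moreover have "\<exists>k::int. ip E (\<xi> + sc 2 y) z - ip E z z = 2 * of_int k" if "z \<in> L" for z
  proof -
    have "evenq (ip E \<xi> z - ip E z z)" using xp that by (auto simp: evenq_def)
    moreover have "evenq (2 * ip E y z)" using evenq_2int yz that by blast
    ultimately have "evenq ((ip E \<xi> z - ip E z z) + 2 * ip E y z)" by (rule evenq_add)
    then show ?thesis unfolding ipc evenq_def by (simp add: algebra_simps)
  qed
  ultimately show ?thesis unfolding class_fun char_cov_def dual_lat_def qspan_eq using sp by blast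
qed

lemma short_exists:
  assumes xi: "\<xi> \<in> char_cov E L"
  shows "\<exists>s\<in>char_class L \<xi>. s \<in> short_cov E L"
proof -
  define N where "N y = ip E (\<lambda>e. \<xi> e + 2 * y e) (\<lambda>e. \<xi> e + 2 * y e)" for y
  have xint: "\<forall>z\<in>L. ip E \<xi> z \<in> \<int>" using xi unfolding char_cov_def dual_lat_def by auto
  have Nk: "N y = ip E \<xi> \<xi> + 4 * (ip E \<xi> y + ip E y y)" for y
    unfolding N_def by (rule class_norm)
  have Nint: "N y - N y' \<in> \<int>" if "y \<in> L" "y' \<in> L" for y y'
  proof -
    have "N y - N y' = 4 * ((ip E \<xi> y + ip E y y) - (ip E \<xi> y' + ip E y' y'))"
      unfolding Nk by (simp add: algebra_simps)
    moreover have "ip E y y \<in> \<int>" "ip E y' y' \<in> \<int>" using ip_Ints that Lz by blast+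
    ultimately show ?thesis using xint that by auto
  qed
  have N0: "N y \<ge> 0" for y unfolding N_def by (rule ip_nonneg)
  obtain y0 where y0: "y0 \<in> L" "\<forall>y. y \<in> L \<longrightarrow> nat \<lceil>N y0\<rceil> \<le> nat \<lceil>N y\<rceil>"
    using ex_has_least_nat[of "\<lambda>y. y \<in> L" 0 "\<lambda>y. nat \<lceil>N y\<rceil>"] L0 by blast
  have le: "N y0 \<le> N y" if yL: "y \<in> L" for y
  proof -
    obtain d where d: "N y - N y0 = of_int d" using Nint[OF yL y0(1)] by (auto elim: Ints_cases)
    have "\<lceil>N y\<rceil> = \<lceil>N y0 + of_int d\<rceil>" using d by (simp add: algebra_simps)
    also have "\<dots> = \<lceil>N y0\<rceil> + d" by simp
    finally have "\<lceil>N y\<rceil> = \<lceil>N y0\<rceil> + d" .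
    moreover have "nat \<lceil>N y0\<rceil> \<le> nat \<lceil>N y\<rceil>" using y0 yL by blast
    moreover have "\<lceil>N y0\<rceil> \<ge> 0" "\<lceil>N y\<rceil> \<ge> 0" using N0[of y0] N0[of y] by simp_all
    ultimately have "d \<ge> 0" by linarith
    then show ?thesis using d by (simp add: algebra_simps)
  qed
  define s where "s = (\<lambda>e. \<xi> e + 2 * y0 e)"
  have sin: "s \<in> char_class L \<xi>" unfolding s_def char_class_def using y0 by blast
  have sc: "s \<in> char_cov E L" unfolding s_def by (rule class_char[OF xi y0(1)])
  have "ip E s s \<le> ip E c c" if "c \<in> char_class L s" for c
  proof -
    have "c \<in> char_class L \<xi>" using that class_shift[OF y0(1)] unfolding s_def by simp
    then obtain y where "y \<in> L" "c = (\<lambda>e. \<xi> e + 2 * y e)" unfolding char_class_def by blast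
    then show ?thesis using le[of y] unfolding N_def s_def by simp
  qed
  then show ?thesis using sin sc unfolding short_cov_def by blast
qed

lemma dinv_short:
  assumes "s \<in> short_cov E L"
  shows "dinv E L (char_class L s) = (real_of_rat (ip E s s) - real (lat_rank L)) / 4"
proof -
  have "Inf {real_of_rat (ip E \<chi> \<chi>) | \<chi>. \<chi> \<in> char_class L s} = real_of_rat (ip E s s)"
  proof (rule cInf_eq_minimum)
    show "real_of_rat (ip E s s) \<in> {real_of_rat (ip E \<chi> \<chi>) | \<chi>. \<chi> \<in> char_class L s}"
      using class_mem[of s] by blast
  next
    fix x assume "x \<in> {real_of_rat (ip E \<chi> \<chi>) | \<chi>. \<chi> \<in> char_class L s}"
    then obtain \<chi> where "\<chi> \<in> char_class L s" "x = real_of_rat (ip E \<chi> \<chi>)" by blast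
    then show "real_of_rat (ip E s s) \<le> x" using assms unfolding short_cov_def
      by (auto simp: of_rat_less_eq)
  qed
  then show ?thesis unfolding dinv_def by simp
qed

end




lemma gs:
  assumes "finite E" "finite G"
  shows "\<exists>p\<in>qv.span G. \<forall>g\<in>G. ip E (x - p) g = 0"
  using assms(2)
proof (induction G arbitrary: x rule: finite_induct)
  case empty then show ?case using qv.span_zero by blast
next
  case (insert g G)
  obtain p0 where p0: "p0 \<in> qv.span G" "\<forall>h\<in>G. ip E (x - p0) h = 0" using insert.IH by blast
  obtain q0 where q0: "q0 \<in> qv.span G" "\<forall>h\<in>G. ip E (g - q0) h = 0" using insert.IH by blast
  define g' where "g' = g - q0"
  have g'G: "\<forall>h\<in>G. ip E g' h = 0" using q0 unfolding g'_def by blast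
  have g'sp: "g' \<in> qv.span (insert g G)"
  proof -
    have "g \<in> qv.span (insert g G)" by (rule qv.span_base) simp
    moreover have "q0 \<in> qv.span (insert g G)" using qv.span_mono[of G "insert g G"] q0(1) by blast
    ultimately show ?thesis unfolding g'_def by (rule qv.span_diff)
  qed
  have sG: "qv.span G \<subseteq> qv.span (insert g G)" by (rule qv.span_mono) auto
  have gsplit: "g = g' + q0" unfolding g'_def by simp
  show ?case
  proof (cases "ip E g' g' = 0")
    case True
    have z: "g' e = 0" if "e \<in> E" for e using ip_zero_imp[OF assms(1) True that] .
    have "ip E (x - p0) g' = 0" using z by (simp add: ip_def)
    moreover have "ip E (x - p0) q0 = 0" using orth_span[OF p0(2) q0(1)] .
    ultimately have "ip E (x - p0) g = 0" unfolding gsplit by (simp add: ip_add2)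
    then show ?thesis using p0 sG by blast
  next
    case False
    define t where "t = ip E (x - p0) g' / ip E g' g'"
    define p where "p = p0 + sc t g'"
    have psp: "p \<in> qv.span (insert g G)" unfolding p_def
      using sG p0(1) g'sp by (intro qv.span_add qv.span_scale) auto
    have xp: "x - p = (x - p0) - sc t g'" unfolding p_def by (simp add: algebra_simps)
    have oG: "\<forall>h\<in>G. ip E (x - p) h = 0" unfolding xp using p0(2) g'G by (simp add: ip_diff1 ip_sc1)
    have "ip E (x - p) q0 = 0" using orth_span[OF oG q0(1)] .
    moreover have "ip E (x - p) g' = 0" unfolding xp t_def using False by (simp add: ip_diff1 ip_sc1)
    ultimately have "ip E (x - p) g = 0" unfolding gsplit by (simp add: ip_add2)
    then show ?thesis using psp oG by blast
  qed
qed

lemma denom_clear: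
  fixes x :: "'e \<Rightarrow> rat"
  assumes "finite E"
  shows "\<exists>N::int. N > 0 \<and> (\<forall>e\<in>E. of_int N * x e \<in> \<int>)"
  using assms
proof (induction E rule: finite_induct)
  case empty then show ?case by (auto intro: exI[of _ 1])
next
  case (insert e E)
  obtain N where N: "N > 0" "\<forall>e\<in>E. of_int N * x e \<in> \<int>" using insert.IH by blast
  obtain a b where ab: "quotient_of (x e) = (a, b)" by (cases "quotient_of (x e)") auto
  have b: "b > 0" using quotient_of_denom_pos[OF ab] .
  have xe: "x e = of_int a / of_int b" using quotient_of_div[OF ab] .
  have "of_int (N * b) * x e = of_int (N * a)" using b unfolding xe by simp
  then have "of_int (N * b) * x e \<in> \<int>" by (metis Ints_of_int)
  moreover have "of_int (N * b) * x e' \<in> \<int>" if "e' \<in> E" for e'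
  proof -
    have "of_int (N * b) * x e' = of_int b * (of_int N * x e')" by simp
    then show ?thesis using N that by (metis Ints_mult Ints_of_int)
  qed
  ultimately have "\<forall>e'\<in>insert e E. of_int (N * b) * x e' \<in> \<int>" by blast
  moreover have "N * b > 0" using N b by simp
  ultimately show ?case by blast
qed




lemma zero_fun_app[simp]: "(0 :: 'a \<Rightarrow> 'b::zero) x = 0" by (simp add: zero_fun_def)

definition ind :: "'v \<Rightarrow> 'v \<Rightarrow> rat" where "ind v = (\<lambda>u. if u = v then 1 else 0)"

locale gr =
  fixes V :: "'v set" and E :: "'e set" and src tgt :: "'e \<Rightarrow> 'v"
  assumes finV: "finite V" and finE: "finite E"
    and ends: "\<forall>e\<in>E. src e \<in> V \<and> tgt e \<in> V"
begin

abbreviation "Cut \<equiv> cut_lattice V E src tgt"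
abbreviation "Flow \<equiv> flow_lattice V E src tgt"
abbreviation "cb \<equiv> cobdry E src tgt"
abbreviation "bd \<equiv> bdry E src tgt"

definition CS where "CS = {cb f | f. \<forall>v. v \<notin> V \<longrightarrow> f v = 0}"
definition FS where "FS = {x \<in> supp E. \<forall>v\<in>V. bd x v = 0}"

lemma src_V: "e \<in> E \<Longrightarrow> src e \<in> V" using ends by blast
lemma tgt_V: "e \<in> E \<Longrightarrow> tgt e \<in> V" using ends by blast

lemma ip_cb: "ip E x (cb g) = (\<Sum>v\<in>V. g v * bd x v)"
proof -
  have "(\<Sum>v\<in>V. g v * bd x v) =
      (\<Sum>v\<in>V. \<Sum>e\<in>E. (if tgt e = v then g v * x e else 0) - (if src e = v then g v * x e else 0))"
    unfolding bdry_def sum_distrib_left by (intro sum.cong refl) (auto simp: right_diff_distrib)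
  also have "\<dots> = (\<Sum>e\<in>E. \<Sum>v\<in>V. (if tgt e = v then g v * x e else 0) - (if src e = v then g v * x e else 0))"
    by (rule sum.swap)
  also have "\<dots> = (\<Sum>e\<in>E. g (tgt e) * x e - g (src e) * x e)"
    by (rule sum.cong) (auto simp: sum_subtractf finV src_V tgt_V)
  also have "\<dots> = ip E x (cb g)"
    unfolding ip_def cobdry_def by (rule sum.cong) (auto simp: algebra_simps)
  finally show ?thesis by simp
qed

lemma bd_ind: assumes "v \<in> V" shows "ip E x (cb (ind v)) = bd x v"
proof -
  have "(\<Sum>u\<in>V. ind v u * bd x u) = (\<Sum>u\<in>V. if u = v then bd x u else 0)"
    by (rule sum.cong) (auto simp: ind_def)
  also have "\<dots> = bd x v" using assms finV by simp
  finally show ?thesis unfolding ip_cb .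
qed

lemma bd_zero: "bd 0 v = 0" by (simp add: bdry_def cong: if_cong)

lemma cb_add: "cb (f + g) = cb f + cb g"
  by (simp add: cobdry_def fun_eq_iff)
lemma cb_sc: "cb (\<lambda>v. c * f v) = sc c (cb f)"
  by (simp add: cobdry_def fun_eq_iff algebra_simps)
lemma cb_neg: "cb (\<lambda>v. - f v) = - cb f"
  by (simp add: cobdry_def fun_eq_iff algebra_simps)
lemma cb_zero: "cb (\<lambda>v. 0) = 0"
  by (simp add: cobdry_def fun_eq_iff)
lemma cb_supp: "cb f \<in> supp E" by (simp add: cobdry_def supp_def)

lemma bd_add: "bd (x + y) v = bd x v + bd y v"
  by (simp add: bdry_def sum.distrib[symmetric] algebra_simps cong: if_cong) 
     (rule sum.cong, auto)
lemma bd_neg: "bd (- x) v = - bd x v"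
  by (simp add: bdry_def sum_negf[symmetric]) (rule sum.cong, auto)
lemma bd_sc: "bd (sc c x) v = c * bd x v"
  by (simp add: bdry_def sum_distrib_left) (rule sum.cong, auto simp: algebra_simps)

lemma zchains_add: "x \<in> zchains E \<Longrightarrow> y \<in> zchains E \<Longrightarrow> x + y \<in> zchains E"
  by (auto simp: zchains_def)
lemma zchains_neg: "x \<in> zchains E \<Longrightarrow> - x \<in> zchains E"
  by (auto simp: zchains_def)
lemma zchains_0: "0 \<in> zchains E"
  by (auto simp: zchains_def)

lemma CS_subspace: "qv.subspace CS"
  unfolding qv.subspace_def CS_def
proof (intro conjI allI ballI impI)
  show "0 \<in> {cb f | f. \<forall>v. v \<notin> V \<longrightarrow> f v = 0}" using cb_zero by force
next
  fix x y assume "x \<in> {cb f | f. \<forall>v. v \<notin> V \<longrightarrow> f v = 0}" "y \<in> {cb f | f. \<forall>v. v \<notin> V \<longrightarrow> f v = 0}"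
  then obtain f g where "\<forall>v. v \<notin> V \<longrightarrow> f v = 0" "x = cb f" "\<forall>v. v \<notin> V \<longrightarrow> g v = 0" "y = cb g" by blast
  then show "x + y \<in> {cb f | f. \<forall>v. v \<notin> V \<longrightarrow> f v = 0}"
    by (intro CollectI exI[of _ "f + g"]) (simp add: cb_add)
next
  fix c x assume "x \<in> {cb f | f. \<forall>v. v \<notin> V \<longrightarrow> f v = 0}"
  then obtain f where "\<forall>v. v \<notin> V \<longrightarrow> f v = 0" "x = cb f" by blast
  then show "sc c x \<in> {cb f | f. \<forall>v. v \<notin> V \<longrightarrow> f v = 0}"
    by (intro CollectI exI[of _ "\<lambda>v. c * f v"]) (simp add: cb_sc)
qed

lemma FS_subspace: "qv.subspace FS"
  unfolding qv.subspace_def FS_def using supp_subspace[of E]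
  by (auto simp: qv.subspace_def bd_add bd_sc bd_zero)

definition GC where "GC = (\<lambda>v. cb (ind v)) ` V"

lemma GC_fin: "finite GC" unfolding GC_def using finV by simp

lemma ind_cb_Cut: "v \<in> V \<Longrightarrow> cb (ind v) \<in> Cut"
  unfolding cut_lattice_def zchains_def
  by (auto simp: cobdry_def ind_def intro!: exI[of _ "ind v"])

lemma GC_Cut: "GC \<subseteq> Cut" unfolding GC_def using ind_cb_Cut by blast

lemma Cut_CS: "Cut \<subseteq> CS" unfolding cut_lattice_def CS_def by blast

lemma CS_span_GC: "CS \<subseteq> qv.span GC"
proof
  fix x assume "x \<in> CS"
  then obtain f where f: "\<forall>v. v \<notin> V \<longrightarrow> f v = 0" "x = cb f" unfolding CS_def by blast
  have "x = (\<Sum>v\<in>V. sc (f v) (cb (ind v)))"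
  proof
    fix e
    show "x e = (\<Sum>v\<in>V. sc (f v) (cb (ind v))) e"
    proof (cases "e \<in> E")
      case True
      have "(\<Sum>v\<in>V. sc (f v) (cb (ind v))) e = (\<Sum>v\<in>V. f v * (ind v (tgt e) - ind v (src e)))"
        unfolding sum_fun_apply using True by (simp add: cobdry_def)
      also have "\<dots> = (\<Sum>v\<in>V. (if v = tgt e then f v else 0) - (if v = src e then f v else 0))"
        by (rule sum.cong) (auto simp: ind_def)
      also have "\<dots> = f (tgt e) - f (src e)"
        using True finV src_V tgt_V by (simp add: sum_subtractf)
      finally show ?thesis using True f(2) by (simp add: cobdry_def)
    next
      case False
      then show ?thesis unfolding sum_fun_apply f(2) by (simp add: cobdry_def)
    qed
  qed
  also have "\<dots> \<in> qv.span GC"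
  proof (rule qv.span_sum)
    fix v assume "v \<in> V"
    then have "cb (ind v) \<in> GC" unfolding GC_def by blast
    then show "sc (f v) (cb (ind v)) \<in> qv.span GC" by (intro qv.span_scale qv.span_base)
  qed
  finally show "x \<in> qv.span GC" .
qed

lemma span_Cut: "qv.span Cut = CS"
proof
  show "qv.span Cut \<subseteq> CS" using qv.span_minimal[OF Cut_CS CS_subspace] .
  show "CS \<subseteq> qv.span Cut" using CS_span_GC qv.span_mono[OF GC_Cut] by blast
qed

lemma span_GC: "qv.span GC = qv.span Cut"
  using qv.span_mono[OF GC_Cut] CS_span_GC span_Cut qv.span_minimal[OF _ qv.subspace_span, of GC]
  by (metis CS_subspace qv.span_subspace GC_Cut Cut_CS order.trans)

lemma Cut_props: "0 \<in> Cut" "x \<in> Cut \<Longrightarrow> y \<in> Cut \<Longrightarrow> x + y \<in> Cut" "x \<in> Cut \<Longrightarrow> - x \<in> Cut"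
    "Cut \<subseteq> zchains E"
proof -
  show "0 \<in> Cut" unfolding cut_lattice_def using cb_zero zchains_0 by force
  show "Cut \<subseteq> zchains E" unfolding cut_lattice_def by blast
next
  assume "x \<in> Cut" "y \<in> Cut"
  then obtain f g where "\<forall>v. v \<notin> V \<longrightarrow> f v = 0" "x = cb f" "\<forall>v. v \<notin> V \<longrightarrow> g v = 0" "y = cb g"
    "x \<in> zchains E" "y \<in> zchains E" unfolding cut_lattice_def by blast
  then show "x + y \<in> Cut" unfolding cut_lattice_def
    by (auto intro!: exI[of _ "f + g"] simp: cb_add zchains_add)
next
  assume "x \<in> Cut"
  then obtain f where "\<forall>v. v \<notin> V \<longrightarrow> f v = 0" "x = cb f" "x \<in> zchains E"
    unfolding cut_lattice_def by blast
  then show "- x \<in> Cut" unfolding cut_lattice_def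
    by (auto intro!: exI[of _ "\<lambda>v. - f v"] simp: cb_neg zchains_neg)
qed

lemma Flow_props: "0 \<in> Flow" "x \<in> Flow \<Longrightarrow> y \<in> Flow \<Longrightarrow> x + y \<in> Flow" "x \<in> Flow \<Longrightarrow> - x \<in> Flow"
    "Flow \<subseteq> zchains E"
  unfolding flow_lattice_def
  by (auto simp: zchains_0 zchains_add zchains_neg bd_add bd_neg bd_zero)

lemma Flow_FS: "Flow \<subseteq> FS"
  unfolding flow_lattice_def FS_def using zchains_supp by blast

lemma FS_span_Flow: "FS \<subseteq> qv.span Flow"
proof
  fix x assume x: "x \<in> FS"
  obtain N :: int where N: "N > 0" "\<forall>e\<in>E. of_int N * x e \<in> \<int>" using denom_clear[OF finE] by blast
  have "sc (of_int N) x \<in> Flow"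
    using x N unfolding FS_def flow_lattice_def zchains_def supp_def by (auto simp: bd_sc)
  then have "sc (1 / of_int N) (sc (of_int N) x) \<in> qv.span Flow"
    by (intro qv.span_scale qv.span_base)
  moreover have "sc (1 / of_int N) (sc (of_int N) x) = x" using N by (simp add: fun_eq_iff)
  ultimately show "x \<in> qv.span Flow" by simp
qed

lemma span_Flow: "qv.span Flow = FS"
  using qv.span_minimal[OF Flow_FS FS_subspace] FS_span_Flow by blast

lemma CS_FS_orth: "a \<in> CS \<Longrightarrow> b \<in> FS \<Longrightarrow> ip E b a = 0"
  unfolding CS_def FS_def by (auto simp: ip_cb)

sublocale C: plat E Cut
proof
  show "finite E" by (rule finE)
  show "Cut \<subseteq> zchains E" "0 \<in> Cut" using Cut_props by auto
  show "x + y \<in> Cut" if "x \<in> Cut" "y \<in> Cut" for x y using Cut_props that by auto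
  show "- x \<in> Cut" if "x \<in> Cut" for x using Cut_props that by auto
  show "\<exists>r\<in>qv.span Cut. \<forall>y\<in>Cut. ip E r y = ip E x y" for x
  proof -
    obtain p where p: "p \<in> qv.span GC" "\<forall>g\<in>GC. ip E (x - p) g = 0" using gs[OF finE GC_fin] by blast
    have "ip E p y = ip E x y" if "y \<in> Cut" for y
    proof -
      have "y \<in> qv.span GC" using that span_GC qv.span_base by blast
      from orth_span[OF p(2) this] show ?thesis by (simp add: ip_diff1)
    qed
    then show ?thesis using p(1) span_GC by blast
  qed
qed

abbreviation "PC \<equiv> restr E Cut"
abbreviation "PF \<equiv> restr E Flow"

definition trunc :: "('e \<Rightarrow> rat) \<Rightarrow> 'e \<Rightarrow> rat" where
  "trunc x = (\<lambda>e. if e \<in> E then x e else 0)"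

lemma ip_trunc: "ip E (trunc x) y = ip E x y" unfolding ip_def trunc_def by simp
lemma trunc_supp: "trunc x \<in> supp E" unfolding trunc_def supp_def by simp
lemma trunc_id: "x \<in> supp E \<Longrightarrow> trunc x = x" unfolding trunc_def supp_def by auto

lemma compl_FS: "trunc x - PC (trunc x) \<in> FS"
proof -
  have "trunc x - PC (trunc x) \<in> supp E"
    using trunc_supp C.R_supp supp_subspace qv.subspace_diff by blast
  moreover have "bd (trunc x - PC (trunc x)) v = 0" if "v \<in> V" for v
  proof -
    have "bd (trunc x - PC (trunc x)) v = ip E (trunc x - PC (trunc x)) (cb (ind v))"
      using bd_ind[OF that] by simp
    also have "\<dots> = 0" using C.R_ip[OF ind_cb_Cut[OF that]] by (simp add: ip_diff1)
    finally show ?thesis .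
  qed
  ultimately show ?thesis unfolding FS_def by blast
qed

sublocale F: plat E Flow
proof
  show "finite E" by (rule finE)
  show "Flow \<subseteq> zchains E" "0 \<in> Flow" using Flow_props by auto
  show "x + y \<in> Flow" if "x \<in> Flow" "y \<in> Flow" for x y using Flow_props that by auto
  show "- x \<in> Flow" if "x \<in> Flow" for x using Flow_props that by auto
  show "\<exists>r\<in>qv.span Flow. \<forall>y\<in>Flow. ip E r y = ip E x y" for x
  proof (rule bexI[of _ "trunc x - PC (trunc x)"])
    show "trunc x - PC (trunc x) \<in> qv.span Flow" using compl_FS span_Flow by blast
    show "\<forall>y\<in>Flow. ip E (trunc x - PC (trunc x)) y = ip E x y"
    proof
      fix y assume y: "y \<in> Flow"
      have "ip E y (PC (trunc x)) = 0"
        using CS_FS_orth[of "PC (trunc x)" y] C.R_span span_Cut Flow_FS y by blast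
      then have "ip E (PC (trunc x)) y = 0" by (simp add: ip_sym)
      then show "ip E (trunc x - PC (trunc x)) y = ip E x y" by (simp add: ip_diff1 ip_trunc)
    qed
  qed
qed

end




context gr
begin

lemma PF_decomp: assumes "x \<in> supp E" shows "PF x = x - PC x"
proof (rule F.R_eq)
  show "x - PC x \<in> qv.span Flow" using compl_FS[of x] trunc_id[OF assms] span_Flow by simp
  show "\<forall>y\<in>Flow. ip E (x - PC x) y = ip E x y"
  proof
    fix y assume y: "y \<in> Flow"
    have "ip E y (PC x) = 0"
      using CS_FS_orth[of "PC x" y] C.R_span span_Cut Flow_FS y by blast
    then have "ip E (PC x) y = 0" by (simp add: ip_sym)
    then show "ip E (x - PC x) y = ip E x y" by (simp add: ip_diff1)
  qed
qed

lemma sum_PC_PF: "x \<in> supp E \<Longrightarrow> x = PC x + PF x"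
  using PF_decomp by simp

lemma PC_FS: assumes "y \<in> FS" shows "PC y = 0"
proof (rule C.R_eq)
  show "0 \<in> qv.span Cut" by (rule qv.span_zero)
  show "\<forall>z\<in>Cut. ip E 0 z = ip E y z" using CS_FS_orth[OF _ assms] Cut_CS by auto
qed

lemma PF_CS: assumes "y \<in> CS" shows "PF y = 0"
proof (rule F.R_eq)
  show "0 \<in> qv.span Flow" by (rule qv.span_zero)
  show "\<forall>z\<in>Flow. ip E 0 z = ip E y z"
  proof
    fix z assume "z \<in> Flow"
    then have "ip E z y = 0" using CS_FS_orth[OF assms] Flow_FS by blast
    then show "ip E 0 z = ip E y z" by (simp add: ip_sym)
  qed
qed

lemma CS_supp: "CS \<subseteq> supp E" unfolding CS_def using cb_supp by blast

lemma zFS_Flow: "x \<in> zchains E \<Longrightarrow> x \<in> FS \<Longrightarrow> x \<in> Flow"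
  unfolding FS_def flow_lattice_def by blast

lemma zCS_Cut: "x \<in> zchains E \<Longrightarrow> x \<in> CS \<Longrightarrow> x \<in> Cut"
  unfolding CS_def cut_lattice_def by blast

lemma zchains_diff: "x \<in> zchains E \<Longrightarrow> y \<in> zchains E \<Longrightarrow> x - y \<in> zchains E"
  by (auto simp: zchains_def)

lemma WD1: assumes "z \<in> zchains E" "PC z \<in> Cut" shows "PF z \<in> Flow"
proof -
  have zs: "z \<in> supp E" using assms zchains_supp by blast
  have "PF z = z - PC z" using PF_decomp[OF zs] .
  moreover have "z - PC z \<in> zchains E" using zchains_diff assms Cut_props(4) by blast
  moreover have "PF z \<in> FS" using F.R_span span_Flow by blast
  ultimately show ?thesis using zFS_Flow by simp
qed

lemma WD2: assumes "z \<in> zchains E" "PF z \<in> Flow" shows "PC z \<in> Cut"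
proof -
  have zs: "z \<in> supp E" using assms zchains_supp by blast
  have "PC z = z - PF z" using PF_decomp[OF zs] by simp
  moreover have "z - PF z \<in> zchains E" using zchains_diff assms Flow_props(4) by blast
  moreover have "PC z \<in> CS" using C.R_span span_Cut by blast
  ultimately show ?thesis using zCS_Cut by simp
qed

lemma norm_split: assumes "x \<in> supp E"
  shows "ip E x x = ip E (PC x) (PC x) + ip E (PF x) (PF x)"
proof -
  have o: "ip E (PF x) (PC x) = 0"
    using CS_FS_orth[of "PC x" "PF x"] C.R_span F.R_span span_Cut span_Flow by blast
  have "ip E x x = ip E (PC x + PF x) (PC x + PF x)" using sum_PC_PF[OF assms] by simp
  also have "\<dots> = ip E (PC x) (PC x) + ip E (PF x) (PF x) + 2 * ip E (PF x) (PC x)"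
    unfolding ip_add1 ip_add2 using ip_sym[of E "PC x" "PF x"] by simp
  finally show ?thesis using o by simp
qed

lemma dcoset_WD:
  assumes "x \<in> zchains E" "x' \<in> zchains E" "dcoset Cut (PC x) = dcoset Cut (PC x')"
  shows "dcoset Flow (PF x) = dcoset Flow (PF x')"
proof -
  obtain y where y: "y \<in> Cut" "PC x = (\<lambda>e. PC x' e + y e)" using C.dcoset_eqD[OF assms(3)] by blast
  have "PC (x - x') = y" using y(2) by (simp add: C.R_diff fun_eq_iff)
  then have fl: "PF (x - x') \<in> Flow" using WD1[OF zchains_diff[OF assms(1,2)]] y(1) by simp
  have "PF x = (\<lambda>e. PF x' e + PF (x - x') e)" by (simp add: F.R_diff)
  then show ?thesis using F.dcoset_shift[OF fl, of "PF x'"] by simp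
qed

lemma dcoset_WD':
  assumes "x \<in> zchains E" "x' \<in> zchains E" "dcoset Flow (PF x) = dcoset Flow (PF x')"
  shows "dcoset Cut (PC x) = dcoset Cut (PC x')"
proof -
  obtain y where y: "y \<in> Flow" "PF x = (\<lambda>e. PF x' e + y e)" using F.dcoset_eqD[OF assms(3)] by blast
  have "PF (x - x') = y" using y(2) by (simp add: F.R_diff fun_eq_iff)
  then have fl: "PC (x - x') \<in> Cut" using WD2[OF zchains_diff[OF assms(1,2)]] y(1) by simp
  have "PC x = (\<lambda>e. PC x' e + PC (x - x') e)" by (simp add: C.R_diff)
  then show ?thesis using C.dcoset_shift[OF fl, of "PC x'"] by simp
qed

lemma half_diff_odd:
  assumes "oddv E x" "oddv E x'" shows "sc (1/2) (x - x') \<in> zchains E"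
  unfolding zchains_def
proof (intro CollectI conjI allI ballI impI)
  fix e assume e: "e \<in> E"
  obtain k where k: "x e = 2 * of_int k + 1" using assms(1) e unfolding oddv_def by blast
  obtain k' where k': "x' e = 2 * of_int k' + 1" using assms(2) e unfolding oddv_def by blast
  have "sc (1/2) (x - x') e = (1/2) * ((2 * of_int k + 1) - (2 * of_int k' + 1))"
    by (simp only: sc_apply minus_apply k k')
  also have "\<dots> = of_int (k - k')" by simp
  finally show "sc (1/2) (x - x') e \<in> \<int>" by (simp only: Ints_of_int)
next
  fix e assume "e \<notin> E"
  then show "sc (1/2) (x - x') e = 0" using assms unfolding oddv_def supp_def by simp
qed

lemma twice_half: "x - x' = sc 2 (sc (1/2) (x - x'))" by (simp add: fun_eq_iff)

lemma class_WD:
  assumes "oddv E x" "oddv E x'" "char_class Cut (PC x) = char_class Cut (PC x')"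
  shows "char_class Flow (PF x) = char_class Flow (PF x')"
proof -
  define z where "z = sc (1/2) (x - x')"
  have zz: "z \<in> zchains E" unfolding z_def using half_diff_odd[OF assms(1,2)] .
  obtain y where y: "y \<in> Cut" "PC x = (\<lambda>e. PC x' e + 2 * y e)" using C.class_eqD[OF assms(3)] by blast
  have "PC (x - x') = PC (sc 2 z)" by (rule arg_cong[where f=PC], unfold z_def, rule twice_half)
  then have "PC (x - x') = sc 2 (PC z)" using C.R_sc[of 2 z] by simp
  moreover have "PC (x - x') = sc 2 y" using y(2) by (simp add: C.R_diff fun_eq_iff)
  ultimately have "PC z = y" by (simp add: fun_eq_iff)
  then have fz: "PF z \<in> Flow" using WD1[OF zz] y(1) by simp
  have "PF (x - x') = PF (sc 2 z)" by (rule arg_cong[where f=PF], unfold z_def, rule twice_half)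
  then have "PF (x - x') = sc 2 (PF z)" using F.R_sc[of 2 z] by simp
  then have "PF x = (\<lambda>e. PF x' e + 2 * PF z e)" by (simp add: F.R_diff fun_eq_iff algebra_simps)
  then show ?thesis using F.class_shift[OF fz] by simp
qed

lemma class_WD':
  assumes "oddv E x" "oddv E x'" "char_class Flow (PF x) = char_class Flow (PF x')"
  shows "char_class Cut (PC x) = char_class Cut (PC x')"
proof -
  define z where "z = sc (1/2) (x - x')"
  have zz: "z \<in> zchains E" unfolding z_def using half_diff_odd[OF assms(1,2)] .
  obtain y where y: "y \<in> Flow" "PF x = (\<lambda>e. PF x' e + 2 * y e)" using F.class_eqD[OF assms(3)] by blast
  have "PF (x - x') = PF (sc 2 z)" by (rule arg_cong[where f=PF], unfold z_def, rule twice_half)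
  then have "PF (x - x') = sc 2 (PF z)" using F.R_sc[of 2 z] by simp
  moreover have "PF (x - x') = sc 2 y" using y(2) by (simp add: F.R_diff fun_eq_iff)
  ultimately have "PF z = y" by (simp add: fun_eq_iff)
  then have fz: "PC z \<in> Cut" using WD2[OF zz] y(1) by simp
  have "PC (x - x') = PC (sc 2 z)" by (rule arg_cong[where f=PC], unfold z_def, rule twice_half)
  then have "PC (x - x') = sc 2 (PC z)" using C.R_sc[of 2 z] by simp
  then have "PC x = (\<lambda>e. PC x' e + 2 * PC z e)" by (simp add: C.R_diff fun_eq_iff algebra_simps)
  then show ?thesis using C.class_shift[OF fz] by simp
qed

end




definition uvec :: "'e \<Rightarrow> 'e \<Rightarrow> rat" where "uvec e = (\<lambda>e'. if e' = e then 1 else 0)"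

lemma uvec_inj: "inj uvec"
  by (rule injI) (auto simp: uvec_def fun_eq_iff split: if_splits)

lemma supp_span_units:
  assumes "finite E" shows "supp E \<subseteq> qv.span (uvec ` E)"
proof
  fix x assume x: "x \<in> supp E"
  have "x = (\<Sum>e\<in>E. sc (x e) (uvec e))"
  proof
    fix e'
    have "(\<Sum>e\<in>E. sc (x e) (uvec e)) e' = (\<Sum>e\<in>E. if e = e' then x e else 0)"
      unfolding sum_fun_apply by (rule sum.cong) (auto simp: uvec_def)
    also have "\<dots> = x e'" using assms x by (auto simp: supp_def)
    finally show "x e' = (\<Sum>e\<in>E. sc (x e) (uvec e)) e'" by simp
  qed
  also have "\<dots> \<in> qv.span (uvec ` E)"
    by (intro qv.span_sum qv.span_scale qv.span_base) auto
  finally show "x \<in> qv.span (uvec ` E)" .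
qed

lemma units_indep: "qv.independent (uvec ` E)"
proof (rule ccontr)
  assume "\<not> qv.independent (uvec ` E)"
  then obtain T u where T: "finite T" "T \<subseteq> uvec ` E"
      "(\<Sum>v\<in>T. sc (u v) v) = 0" "\<exists>v\<in>T. u v \<noteq> 0"
    unfolding qv.dependent_explicit by blast
  then obtain v where v: "v \<in> T" "u v \<noteq> 0" by blast
  then obtain e where e: "v = uvec e" using T by blast
  have "(\<Sum>w\<in>T. sc (u w) w) e = (\<Sum>w\<in>T. if w = v then u w else 0)"
    unfolding sum_fun_apply
  proof (rule sum.cong)
    fix w assume "w \<in> T"
    then obtain e' where "w = uvec e'" using T by blast
    then show "sc (u w) w e = (if w = v then u w else 0)"
      using e by (auto simp: uvec_def fun_eq_iff)
  qed simp
  also have "\<dots> = u v" using v T by simp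
  finally show False using T v by simp
qed

context plat
begin

lemma rank_basis:
  assumes "B \<subseteq> L" "qv.independent B" "L \<subseteq> qv.span B"
  shows "finite B \<and> lat_rank L = card B"
proof -
  have fB: "finite B"
    using qv.independent_span_bound[OF finite_imageI[OF finE, of uvec] assms(2)]
      assms(1) Lsupp supp_span_units[OF finE] by blast
  have bound: "card S \<le> card B" if "finite S" "S \<subseteq> L" "qindep S" for S
  proof -
    have "qv.independent S" using that qindep_eq by blast
    moreover have "S \<subseteq> qv.span B" using that assms(3) by blast
    ultimately show ?thesis using qv.independent_span_bound[OF fB] by blast
  qed
  have "lat_rank L = card B"
    unfolding lat_rank_def
  proof (rule Max_eqI)
    show "finite {card S |S. finite S \<and> S \<subseteq> L \<and> qindep S}"
      by (rule finite_subset[of _ "{..card B}"]) (auto dest: bound)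
    show "y \<le> card B" if "y \<in> {card S |S. finite S \<and> S \<subseteq> L \<and> qindep S}" for y
      using that bound by blast
    show "card B \<in> {card S |S. finite S \<and> S \<subseteq> L \<and> qindep S}"
      using fB assms qindep_eq by blast
  qed
  then show ?thesis using fB by blast
qed

lemma basis_ex: obtains B where "B \<subseteq> L" "qv.independent B" "L \<subseteq> qv.span B" "finite B"
    "lat_rank L = card B"
  using qv.maximal_independent_subset[of L] rank_basis by metis

end

context gr
begin

lemma indep_union:
  assumes A: "A \<subseteq> Cut" "qv.independent A" "finite A"
    and B: "B \<subseteq> Flow" "qv.independent B" "finite B"
  shows "qv.independent (A \<union> B) \<and> A \<inter> B = {}"
proof -
  have disj: "A \<inter> B = {}"
  proof (rule ccontr)
    assume "A \<inter> B \<noteq> {}"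
    then obtain x where x: "x \<in> A" "x \<in> B" by blast
    then have "x \<in> CS" "x \<in> FS" using A B Cut_CS Flow_FS by blast+
    then have "ip E x x = 0" using CS_FS_orth by blast
    then have "x = 0" using ip_zero_supp[OF finE] \<open>x \<in> CS\<close> CS_supp by blast
    then show False using x A qv.dependent_zero by blast
  qed
  have "\<not> qv.dependent (A \<union> B)"
  proof
    assume "qv.dependent (A \<union> B)"
    then obtain u where u: "\<exists>v\<in>A \<union> B. u v \<noteq> 0" "(\<Sum>v\<in>A \<union> B. sc (u v) v) = 0"
      using qv.dependent_finite[of "A \<union> B"] A B by auto
    define a where "a = (\<Sum>v\<in>A. sc (u v) v)"
    define b where "b = (\<Sum>v\<in>B. sc (u v) v)"
    have ab: "a + b = 0" using u(2) unfolding a_def b_def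
      by (simp add: sum.union_disjoint A(3) B(3) disj)
    have "a \<in> qv.span A" unfolding a_def by (intro qv.span_sum qv.span_scale qv.span_base)
    then have aC: "a \<in> CS" using qv.span_mono[OF A(1)] span_Cut by blast
    have "b \<in> qv.span B" unfolding b_def by (intro qv.span_sum qv.span_scale qv.span_base)
    then have bF: "b \<in> FS" using qv.span_mono[OF B(1)] span_Flow by blast
    have "b = - a" using ab by (simp add: eq_neg_iff_add_eq_0 add.commute)
    then have "ip E a a = - ip E b a" by (simp add: ip_neg1)
    then have "ip E a a = 0" using CS_FS_orth[OF aC bF] by simp
    then have a0: "a = 0" using ip_zero_supp[OF finE] aC CS_supp by blast
    then have b0: "b = 0" using ab by simp
    have "\<forall>v\<in>A. u v = 0" using a0 A qv.dependent_finite[of A] unfolding a_def by blast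
    moreover have "\<forall>v\<in>B. u v = 0" using b0 B qv.dependent_finite[of B] unfolding b_def by blast
    ultimately show False using u(1) by blast
  qed
  then show ?thesis using disj by blast
qed

lemma rank_sum: "lat_rank Cut + lat_rank Flow = card E"
proof -
  obtain A where A: "A \<subseteq> Cut" "qv.independent A" "Cut \<subseteq> qv.span A" "finite A" "lat_rank Cut = card A"
    by (rule C.basis_ex)
  obtain B where B: "B \<subseteq> Flow" "qv.independent B" "Flow \<subseteq> qv.span B" "finite B" "lat_rank Flow = card B"
    by (rule F.basis_ex)
  have iu: "qv.independent (A \<union> B)" and d: "A \<inter> B = {}" using indep_union[OF A(1,2,4) B(1,2,4)] by auto
  have cAB: "card (A \<union> B) = card A + card B" using card_Un_disjoint[OF A(4) B(4) d] .
  have cE: "card (uvec ` E) = card E" using card_image[OF inj_on_subset[OF uvec_inj, of E]] by simp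
  have "A \<union> B \<subseteq> supp E" using A(1) B(1) Cut_props(4) Flow_props(4) zchains_supp by blast
  then have "A \<union> B \<subseteq> qv.span (uvec ` E)" using supp_span_units[OF finE] by (rule order.trans)
  then have "card (A \<union> B) \<le> card (uvec ` E)"
    using qv.independent_span_bound[OF finite_imageI[OF finE] iu] by simp
  then have le: "card A + card B \<le> card E" using cAB cE by simp
  have "uvec ` E \<subseteq> qv.span (A \<union> B)"
  proof
    fix x assume "x \<in> uvec ` E"
    then have xs: "x \<in> supp E" by (auto simp: uvec_def supp_def)
    have sA: "qv.span Cut \<subseteq> qv.span A" using qv.span_mono[OF A(3)] by (simp only: qv.span_span)
    have sB: "qv.span Flow \<subseteq> qv.span B" using qv.span_mono[OF B(3)] by (simp only: qv.span_span)
    have "PC x \<in> qv.span A" using C.R_span sA by blast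
    then have 1: "PC x \<in> qv.span (A \<union> B)" using qv.span_mono[of A "A \<union> B"] by blast
    have "PF x \<in> qv.span B" using F.R_span sB by blast
    then have 2: "PF x \<in> qv.span (A \<union> B)" using qv.span_mono[of B "A \<union> B"] by blast
    have "PC x + PF x \<in> qv.span (A \<union> B)" using qv.span_add[OF 1 2] .
    then show "x \<in> qv.span (A \<union> B)" using sum_PC_PF[OF xs] by simp
  qed
  then have "card (uvec ` E) \<le> card (A \<union> B)"
    using qv.independent_span_bound[OF _ units_indep[of E], of "A \<union> B"] A(4) B(4) by simp
  then have "card E \<le> card A + card B" using cAB cE by simp
  then show ?thesis using le A(5) B(5) by simp
qed

end




context gr
begin

definition otl :: "('e \<Rightarrow> rat) \<Rightarrow> 'e \<Rightarrow> 'v" where "otl \<chi> e = (if \<chi> e = 1 then src e else tgt e)"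
definition ohd :: "('e \<Rightarrow> rat) \<Rightarrow> 'e \<Rightarrow> 'v" where "ohd \<chi> e = (if \<chi> e = 1 then tgt e else src e)"

fun dw :: "('e \<Rightarrow> rat) \<Rightarrow> 'v \<Rightarrow> 'e list \<Rightarrow> 'v \<Rightarrow> bool" where
  "dw \<chi> u [] v = (u = v)"
| "dw \<chi> u (e # p) v = (e \<in> E \<and> otl \<chi> e = u \<and> dw \<chi> (ohd \<chi> e) p v)"

definition ce :: "'e \<Rightarrow> 'v \<Rightarrow> rat" where
  "ce e z = (if tgt e = z then 1 else 0) - (if src e = z then 1 else 0)"

lemma bd_ce: "bd x z = (\<Sum>e\<in>E. x e * ce e z)"
  unfolding bdry_def ce_def by (rule sum.cong) (auto simp: algebra_simps)

lemma pm1_ce: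
  assumes "pm1 E \<chi>" "e \<in> E"
  shows "\<chi> e * ce e z = (if ohd \<chi> e = z then 1 else 0) - (if otl \<chi> e = z then 1 else 0)"
  using assms unfolding pm1_def ce_def ohd_def otl_def by auto

lemma dw_tele:
  "dw \<chi> u p v \<Longrightarrow>
    sum_list (map (\<lambda>e. (if ohd \<chi> e = z then 1 else 0) - (if otl \<chi> e = z then 1 else 0)) p)
    = (if v = z then 1 else 0) - (if u = z then (1::rat) else 0)"
  by (induction p arbitrary: u) auto

lemma dw_E: "dw \<chi> u p v \<Longrightarrow> set p \<subseteq> E"
  by (induction p arbitrary: u) auto

lemma dw_append: "dw \<chi> u (p1 @ p2) v \<Longrightarrow> \<exists>m. dw \<chi> u p1 m \<and> dw \<chi> m p2 v"
  by (induction p1 arbitrary: u) auto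

definition flip :: "'e list \<Rightarrow> ('e \<Rightarrow> rat) \<Rightarrow> 'e \<Rightarrow> rat" where
  "flip p \<chi> = (\<lambda>e. if e \<in> set p then - \<chi> e else \<chi> e)"

lemma flip_pm1: "pm1 E \<chi> \<Longrightarrow> pm1 E (flip p \<chi>)"
  unfolding pm1_def flip_def supp_def by auto

lemma flip_bd:
  assumes pm: "pm1 E \<chi>" and w: "dw \<chi> u p v" and d: "distinct p"
  shows "bd (flip p \<chi>) z = bd \<chi> z + 2 * ((if u = z then 1 else 0) - (if v = z then 1 else 0))"
proof -
  have pE: "set p \<subseteq> E" using dw_E[OF w] .
  have "bd (flip p \<chi>) z - bd \<chi> z = (\<Sum>e\<in>E. (flip p \<chi> e - \<chi> e) * ce e z)"
    unfolding bd_ce by (simp add: sum_subtractf algebra_simps)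
  also have "\<dots> = (\<Sum>e\<in>E. if e \<in> set p then -2 * (\<chi> e * ce e z) else 0)"
    by (rule sum.cong) (auto simp: flip_def)
  also have "\<dots> = (\<Sum>e\<in>set p. -2 * (\<chi> e * ce e z))"
    using pE finE by (simp add: sum.If_cases Int_absorb1)
  also have "\<dots> = (\<Sum>e\<in>set p. -2 * ((if ohd \<chi> e = z then 1 else 0) - (if otl \<chi> e = z then 1 else 0)))"
  proof (rule sum.cong)
    fix e assume "e \<in> set p"
    then have "e \<in> E" using pE by blast
    then show "-2 * (\<chi> e * ce e z) = -2 * ((if ohd \<chi> e = z then 1 else 0) - (if otl \<chi> e = z then 1 else 0))"
      using pm1_ce[OF pm] by simp
  qed simp
  also have "\<dots> = -2 * (\<Sum>e\<in>set p. (if ohd \<chi> e = z then 1 else 0) - (if otl \<chi> e = z then 1 else 0))"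
    by (simp add: sum_distrib_left)
  also have "\<dots> = -2 * sum_list (map (\<lambda>e. (if ohd \<chi> e = z then 1 else 0) - (if otl \<chi> e = z then 1 else 0)) p)"
    using d by (simp add: sum_list_distinct_conv_sum_set)
  also have "\<dots> = -2 * ((if v = z then 1 else 0) - (if u = z then 1 else 0))"
    using dw_tele[OF w] by simp
  finally show ?thesis by (simp add: algebra_simps)
qed

definition reach :: "('e \<Rightarrow> rat) \<Rightarrow> 'v \<Rightarrow> 'v set" where
  "reach \<chi> v = {u. \<exists>p. dw \<chi> u p v \<and> distinct p}"

lemma reach_self: "v \<in> reach \<chi> v"
  unfolding reach_def by (auto intro: exI[of _ "[]"])

lemma reach_closed:
  assumes "e \<in> E" "ohd \<chi> e \<in> reach \<chi> v"
  shows "otl \<chi> e \<in> reach \<chi> v"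
proof -
  obtain p where p: "dw \<chi> (ohd \<chi> e) p v" "distinct p" using assms(2) unfolding reach_def by blast
  show ?thesis
  proof (cases "e \<in> set p")
    case False
    then have "dw \<chi> (otl \<chi> e) (e # p) v" "distinct (e # p)" using p assms(1) by auto
    then show ?thesis unfolding reach_def by blast
  next
    case True
    then obtain p1 p2 where sp: "p = p1 @ e # p2" by (meson split_list)
    then obtain m where "dw \<chi> (ohd \<chi> e) p1 m" "dw \<chi> m (e # p2) v" using dw_append p(1) by blast
    then have "dw \<chi> (otl \<chi> e) (e # p2) v" by auto
    moreover have "distinct (e # p2)" using p(2) sp by simp
    ultimately show ?thesis unfolding reach_def by blast
  qed
qed

lemma reach_V: assumes "v \<in> V" shows "reach \<chi> v \<subseteq> V"
proof
  fix u assume "u \<in> reach \<chi> v"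
  then obtain p where p: "dw \<chi> u p v" unfolding reach_def by blast
  then show "u \<in> V"
  proof (cases p)
    case Nil then show ?thesis using p assms by simp
  next
    case (Cons e q) then show ?thesis using p ends by (auto simp: otl_def)
  qed
qed

lemma sum_bd: "(\<Sum>v\<in>V. bd x v) = 0"
proof -
  have "(\<Sum>v\<in>V. bd x v) = ip E x (cb (\<lambda>v. 1))" unfolding ip_cb by simp
  also have "cb (\<lambda>v. 1) = 0" by (simp add: cobdry_def fun_eq_iff)
  finally show ?thesis by (simp add: ip_def)
qed

end




context gr
begin

lemma evenq_pos: "evenq d \<Longrightarrow> d > 0 \<Longrightarrow> d \<ge> 2"
  unfolding evenq_def by auto

lemma evenq_neg: "evenq d \<Longrightarrow> d < 0 \<Longrightarrow> d \<le> -2"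
  unfolding evenq_def by auto

lemma orient_terms:
  assumes "pm1 E \<chi>" "e \<in> E"
  shows "\<chi> e * (g (tgt e) - g (src e)) = g (ohd \<chi> e) - g (otl \<chi> e)"
    "(g (tgt e) - g (src e)) * (g (tgt e) - g (src e)) = (g (ohd \<chi> e) - g (otl \<chi> e)) * (g (ohd \<chi> e) - g (otl \<chi> e))"
  using assms unfolding pm1_def ohd_def otl_def by (auto simp: algebra_simps)

lemma hakimi_step:
  fixes b :: "'v \<Rightarrow> rat"
  assumes par: "\<And>\<chi> z. pm1 E \<chi> \<Longrightarrow> z \<in> V \<Longrightarrow> evenq (bd \<chi> z - b z)"
    and sumb: "(\<Sum>z\<in>V. b z) = 0"
    and short: "\<And>S. S \<subseteq> V \<Longrightarrow> 0 \<le> (\<Sum>z\<in>S. b z) +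
        ip E (cb (\<lambda>z. if z \<in> S then 1 else 0)) (cb (\<lambda>z. if z \<in> S then 1 else 0))"
    and pm: "pm1 E \<chi>" and ne: "\<exists>z\<in>V. bd \<chi> z \<noteq> b z"
  shows "\<exists>\<chi>'. pm1 E \<chi>' \<and> (\<Sum>z\<in>V. \<bar>bd \<chi>' z - b z\<bar>) = (\<Sum>z\<in>V. \<bar>bd \<chi> z - b z\<bar>) - 4"
proof -
  define D where "D z = bd \<chi> z - b z" for z
  have sD: "(\<Sum>z\<in>V. D z) = 0" unfolding D_def using sum_bd sumb by (simp add: sum_subtractf)
  obtain v where v: "v \<in> V" "D v > 0"
  proof (rule ccontr)
    assume "\<not> thesis"
    then have le: "\<forall>z\<in>V. D z \<le> 0" using that by force
    have "(\<Sum>z\<in>V. - D z) = 0" using sD by (simp add: sum_negf)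
    then have "\<forall>z\<in>V. - D z = 0" using sum_nonneg_eq_0_iff[OF finV, of "\<lambda>z. - D z"] le by auto
    then show False using ne unfolding D_def by auto
  qed
  have Dv: "D v \<ge> 2" using evenq_pos[OF par[OF pm v(1)]] v(2) unfolding D_def by simp
  define S where "S = reach \<chi> v"
  have SV: "S \<subseteq> V" unfolding S_def using reach_V[OF v(1)] .
  have vS: "v \<in> S" unfolding S_def by (rule reach_self)
  have finS: "finite S" using finite_subset[OF SV finV] .
  show ?thesis
  proof (cases "\<exists>w\<in>S. D w < 0")
    case True
    then obtain w where w: "w \<in> S" "D w < 0" by blast
    have wV: "w \<in> V" using w SV by blast
    have Dw: "D w \<le> -2" using evenq_neg[OF par[OF pm wV]] w(2) unfolding D_def by simp
    have wv: "w \<noteq> v" using w v by auto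
    obtain p where p: "dw \<chi> w p v" "distinct p" using w(1) unfolding S_def reach_def by blast
    define \<chi>' where "\<chi>' = flip p \<chi>"
    have pm': "pm1 E \<chi>'" unfolding \<chi>'_def by (rule flip_pm1[OF pm])
    have bd': "bd \<chi>' z - b z = D z + 2 * ((if w = z then 1 else 0) - (if v = z then 1 else 0))" for z
      unfolding \<chi>'_def D_def using flip_bd[OF pm p] by simp
    have "\<bar>bd \<chi>' z - b z\<bar> = \<bar>D z\<bar> + ((if z = w then -2 else 0) + (if z = v then -2 else 0))" for z
      unfolding bd' using Dw Dv wv by auto
    then have "(\<Sum>z\<in>V. \<bar>bd \<chi>' z - b z\<bar>) =
        (\<Sum>z\<in>V. \<bar>D z\<bar>) + ((\<Sum>z\<in>V. if z = w then -2 else 0) + (\<Sum>z\<in>V. if z = v then -2 else 0))"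
      by (simp add: sum.distrib)
    also have "\<dots> = (\<Sum>z\<in>V. \<bar>D z\<bar>) - 4" using wV v(1) finV by simp
    finally show ?thesis using pm' unfolding D_def by blast
  next
    case False
    then have geS: "\<forall>z\<in>S. b z \<le> bd \<chi> z" unfolding D_def by force
    define g where "g z = (if z \<in> S then 1 else (0::rat))" for z
    have lt: "(\<Sum>z\<in>S. b z) < (\<Sum>z\<in>S. bd \<chi> z)"
      using sum_strict_mono_ex1[OF finS geS] vS v(2) unfolding D_def by force
    have "(\<Sum>z\<in>V. g z * bd \<chi> z) = (\<Sum>z\<in>V. if z \<in> S then bd \<chi> z else 0)"
      by (rule sum.cong) (auto simp: g_def)
    also have "\<dots> = (\<Sum>z\<in>V \<inter> S. bd \<chi> z)" using sum.inter_restrict[OF finV] by metis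
    also have "V \<inter> S = S" using SV by blast
    finally have "(\<Sum>z\<in>S. bd \<chi> z) = (\<Sum>z\<in>V. g z * bd \<chi> z)" by simp
    also have "\<dots> = ip E \<chi> (cb g)" unfolding ip_cb ..
    also have "\<dots> = (\<Sum>e\<in>E. g (ohd \<chi> e) - g (otl \<chi> e))"
      unfolding ip_def cobdry_def by (rule sum.cong) (auto simp: orient_terms[OF pm])
    finally have A: "(\<Sum>z\<in>S. bd \<chi> z) = (\<Sum>e\<in>E. g (ohd \<chi> e) - g (otl \<chi> e))" .
    have B: "ip E (cb g) (cb g) = (\<Sum>e\<in>E. (g (ohd \<chi> e) - g (otl \<chi> e)) * (g (ohd \<chi> e) - g (otl \<chi> e)))"
      unfolding ip_def cobdry_def by (rule sum.cong) (auto simp: orient_terms[OF pm])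
    have C: "(g (ohd \<chi> e) - g (otl \<chi> e)) + (g (ohd \<chi> e) - g (otl \<chi> e)) * (g (ohd \<chi> e) - g (otl \<chi> e)) = 0"
      if "e \<in> E" for e
    proof (cases "ohd \<chi> e \<in> S")
      case True
      then have "otl \<chi> e \<in> S" using reach_closed[OF that] unfolding S_def by blast
      then show ?thesis using True unfolding g_def by simp
    next
      case False
      then show ?thesis unfolding g_def by simp
    qed
    have "(\<Sum>z\<in>S. bd \<chi> z) + ip E (cb g) (cb g) = 0"
      unfolding A B sum.distrib[symmetric] using C by simp
    moreover have "0 \<le> (\<Sum>z\<in>S. b z) + ip E (cb g) (cb g)"
      using short[OF SV] unfolding g_def .
    ultimately show ?thesis using lt by simp
  qed
qed

lemma hakimi:
  fixes b :: "'v \<Rightarrow> rat"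
  assumes par: "\<And>\<chi> z. pm1 E \<chi> \<Longrightarrow> z \<in> V \<Longrightarrow> evenq (bd \<chi> z - b z)"
    and sumb: "(\<Sum>z\<in>V. b z) = 0"
    and short: "\<And>S. S \<subseteq> V \<Longrightarrow> 0 \<le> (\<Sum>z\<in>S. b z) +
        ip E (cb (\<lambda>z. if z \<in> S then 1 else 0)) (cb (\<lambda>z. if z \<in> S then 1 else 0))"
  shows "\<exists>\<chi>. pm1 E \<chi> \<and> (\<forall>z\<in>V. bd \<chi> z = b z)"
proof -
  define M where "M \<chi> = (\<Sum>z\<in>V. \<bar>bd \<chi> z - b z\<bar>)" for \<chi>
  have M0: "M \<chi> \<ge> 0" for \<chi> unfolding M_def by (rule sum_nonneg) simp
  have main: "\<forall>\<chi>. pm1 E \<chi> \<longrightarrow> nat \<lfloor>M \<chi>\<rfloor> = n \<longrightarrow> (\<exists>\<chi>'. pm1 E \<chi>' \<and> (\<forall>z\<in>V. bd \<chi>' z = b z))" for n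
  proof (induction n rule: less_induct)
    case (less n)
    show ?case
    proof (intro allI impI)
      fix \<chi> assume pm: "pm1 E \<chi>" and n: "nat \<lfloor>M \<chi>\<rfloor> = n"
      show "\<exists>\<chi>'. pm1 E \<chi>' \<and> (\<forall>z\<in>V. bd \<chi>' z = b z)"
      proof (cases "\<forall>z\<in>V. bd \<chi> z = b z")
        case True then show ?thesis using pm by blast
      next
        case False
        then obtain \<chi>' where \<chi>': "pm1 E \<chi>'" "M \<chi>' = M \<chi> - 4"
          using hakimi_step[OF par sumb short pm] unfolding M_def by blast
        have "M \<chi> \<ge> 4" using M0[of \<chi>'] \<chi>'(2) by simp
        have "\<lfloor>M \<chi>'\<rfloor> = \<lfloor>M \<chi>\<rfloor> - 4" using \<chi>'(2) by (simp add: floor_diff_of_int[of _ 4, simplified])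
        then have "nat \<lfloor>M \<chi>'\<rfloor> < n" using n \<open>M \<chi> \<ge> 4\<close> by linarith
        then show ?thesis using less.IH \<chi>'(1) by blast
      qed
    qed
  qed
  define \<chi>0 where "\<chi>0 = (\<lambda>e. if e \<in> E then 1 else (0::rat))"
  have "pm1 E \<chi>0" unfolding \<chi>0_def pm1_def supp_def by simp
  then show ?thesis using main by blast
qed

end




context plat
begin

lemma char_dual_add:
  assumes a: "a \<in> char_cov E L" and eta: "\<eta> \<in> dual_lat E L"
  shows "a + sc 2 \<eta> \<in> char_cov E L"
proof -
  have as: "a \<in> qv.span L" and aint: "\<forall>z\<in>L. ip E a z \<in> \<int>"
    and ap: "\<forall>z\<in>L. \<exists>k::int. ip E a z - ip E z z = 2 * of_int k"
    using a unfolding char_cov_def dual_lat_def qspan_eq by auto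
  have es: "\<eta> \<in> qv.span L" and eint: "\<forall>z\<in>L. ip E \<eta> z \<in> \<int>"
    using eta unfolding dual_lat_def qspan_eq by auto
  have sp: "a + sc 2 \<eta> \<in> qv.span L" using qv.span_add[OF as qv.span_scale[OF es]] .
  have ipc: "ip E (a + sc 2 \<eta>) z = ip E a z + 2 * ip E \<eta> z" for z
    by (simp only: ip_add1 ip_sc1)
  have "ip E (a + sc 2 \<eta>) z \<in> \<int>" if "z \<in> L" for z
    unfolding ipc using aint eint that by auto
  moreover have "\<exists>k::int. ip E (a + sc 2 \<eta>) z - ip E z z = 2 * of_int k" if "z \<in> L" for z
  proof -
    have "evenq (ip E a z - ip E z z)" using ap that by (auto simp: evenq_def)
    moreover have "evenq (2 * ip E \<eta> z)" using evenq_2int eint that by blast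
    ultimately have "evenq ((ip E a z - ip E z z) + 2 * ip E \<eta> z)" by (rule evenq_add)
    then show ?thesis unfolding ipc evenq_def by (simp add: algebra_simps)
  qed
  ultimately show ?thesis unfolding char_cov_def dual_lat_def qspan_eq using sp by blast
qed

lemma R_dual: assumes "x \<in> zchains E" shows "restr E L x \<in> dual_lat E L"
proof -
  have "ip E (restr E L x) y \<in> \<int>" if "y \<in> L" for y
    using ip_Ints[OF assms, of y] Lz that R_ip[OF that] by auto
  then show ?thesis unfolding dual_lat_def qspan_eq using R_span by blast
qed

definition one :: "'e \<Rightarrow> rat" where "one = (\<lambda>e. if e \<in> E then 1 else 0)"

lemma one_pm1: "pm1 E one" unfolding one_def pm1_def supp_def by simp

lemma char_surj_from_dual:
  assumes ds: "\<And>\<eta>. \<eta> \<in> dual_lat E L \<Longrightarrow> \<exists>z\<in>zchains E. restr E L z = \<eta>"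
    and xi: "\<xi> \<in> char_cov E L"
  shows "\<exists>x. oddv E x \<and> restr E L x = \<xi>"
proof -
  define \<eta> where "\<eta> = sc (1/2) (\<xi> - restr E L one)"
  have c1: "restr E L one \<in> char_cov E L" using R_char[OF pm1_oddv[OF one_pm1]] .
  have xs: "\<xi> \<in> qv.span L" and xint: "\<forall>z\<in>L. ip E \<xi> z \<in> \<int>"
    and xp: "\<forall>z\<in>L. \<exists>k::int. ip E \<xi> z - ip E z z = 2 * of_int k"
    using xi unfolding char_cov_def dual_lat_def qspan_eq by auto
  have os: "restr E L one \<in> qv.span L" and oint: "\<forall>z\<in>L. ip E (restr E L one) z \<in> \<int>"
    and op: "\<forall>z\<in>L. \<exists>k::int. ip E (restr E L one) z - ip E z z = 2 * of_int k"
    using c1 unfolding char_cov_def dual_lat_def qspan_eq by auto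
  have "\<eta> \<in> dual_lat E L"
  proof -
    have "\<eta> \<in> qv.span L" unfolding \<eta>_def by (rule qv.span_scale[OF qv.span_diff[OF xs os]])
    moreover have "ip E \<eta> z \<in> \<int>" if zL: "z \<in> L" for z
    proof -
      obtain k where k: "ip E \<xi> z - ip E z z = 2 * of_int k" using xp zL by blast
      obtain l where l: "ip E (restr E L one) z - ip E z z = 2 * of_int l" using op zL by blast
      have h1: "ip E \<eta> z = (1/2) * (ip E \<xi> z - ip E (restr E L one) z)"
        unfolding \<eta>_def by (simp only: ip_sc1 ip_diff1)
      have h2: "ip E \<xi> z - ip E (restr E L one) z = 2 * of_int (k - l)" using k l by (simp add: algebra_simps)
      have "ip E \<eta> z = of_int (k - l)" unfolding h1 h2 by simp
      then show ?thesis by simp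
    qed
    ultimately show ?thesis unfolding dual_lat_def qspan_eq by blast
  qed
  then obtain z where z: "z \<in> zchains E" "restr E L z = \<eta>" using ds by blast
  define x where "x = one + sc 2 z"
  have "oddv E x"
    unfolding oddv_def x_def
  proof (intro conjI ballI)
    show "one + sc 2 z \<in> supp E" using z(1) unfolding zchains_def supp_def one_def by simp
  next
    fix e assume e: "e \<in> E"
    have "z e \<in> \<int>" using z(1) e unfolding zchains_def by blast
    then obtain k where k: "z e = of_int k" by (auto elim: Ints_cases)
    have "(one + sc 2 z) e = 2 * of_int k + 1" using e k by (simp add: one_def)
    then show "\<exists>k::int. (one + sc 2 z) e = 2 * of_int k + 1" by blast
  qed
  moreover have "restr E L x = \<xi>"
  proof -
    have "restr E L x = restr E L one + sc 2 \<eta>" unfolding x_def R_add R_sc z(2) ..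
    also have "\<dots> = \<xi>" unfolding \<eta>_def by (rule ext) simp
    finally show ?thesis .
  qed
  ultimately show ?thesis by blast
qed

lemma pm1_norm: assumes "pm1 E x" shows "ip E x x = of_nat (card E)"
proof -
  have "ip E x x = (\<Sum>e\<in>E. 1)" unfolding ip_def
    by (rule sum.cong) (use assms in \<open>auto simp: pm1_def\<close>)
  then show ?thesis by simp
qed

lemma odd_sq:
  fixes c :: rat
  assumes "c = 2 * of_int k + 1"
  shows "1 \<le> c * c \<and> (c \<noteq> 1 \<and> c \<noteq> -1 \<longrightarrow> 5 \<le> c * c)"
proof -
  define K :: rat where "K = of_int (k * (k + 1))"
  have sq: "c * c = 4 * K + 1" unfolding assms K_def by (simp add: algebra_simps)
  have nn: "0 \<le> k * (k + 1)" by (cases "k \<ge> 0") (auto simp: zero_le_mult_iff)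
  have K0: "0 \<le> K" unfolding K_def using nn by (simp only: of_int_0_le_iff)
  have K1: "1 \<le> K" if "c \<noteq> 1" "c \<noteq> -1"
  proof -
    have "k \<noteq> 0" "k \<noteq> -1" using that unfolding assms by auto
    then have "k * (k + 1) \<noteq> 0" by simp
    then have "1 \<le> k * (k + 1)" using nn by linarith
    then show ?thesis unfolding K_def by (metis of_int_1 of_int_le_iff)
  qed
  show ?thesis using sq K0 K1 by auto
qed

lemma odd_norm_pm1:
  assumes od: "oddv E x" and le: "ip E x x \<le> of_nat (card E)" shows "pm1 E x"
proof (rule ccontr)
  assume np: "\<not> pm1 E x"
  then obtain e0 where e0: "e0 \<in> E" "x e0 \<noteq> 1" "x e0 \<noteq> -1" using od np unfolding pm1_def oddv_def by blast
  have "\<forall>e\<in>E. (\<lambda>e. 1) e \<le> x e * x e"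
  proof
    fix e assume "e \<in> E"
    then obtain k where k: "x e = 2 * of_int k + 1" using od unfolding oddv_def by blast
    show "(\<lambda>e. 1) e \<le> x e * x e" using odd_sq[OF k] by simp
  qed
  moreover have "\<exists>e\<in>E. (\<lambda>e. 1) e < x e * x e"
  proof -
    obtain k where k: "x e0 = 2 * of_int k + 1" using od e0 unfolding oddv_def by blast
    have "1 < x e0 * x e0" using odd_sq[OF k] e0 by simp
    then show ?thesis using e0 by auto
  qed
  ultimately have "(\<Sum>e\<in>E. (1::rat)) < (\<Sum>e\<in>E. x e * x e)"
    by (rule sum_strict_mono_ex1[OF finE, of "\<lambda>e. 1" "\<lambda>e. x e * x e"])
  then show False using le unfolding ip_def by simp
qed

end




context gr
begin

lemma sum_indicator_V:
  fixes f :: "'v \<Rightarrow> rat"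
  assumes "S \<subseteq> V"
  shows "(\<Sum>v\<in>V. (if v \<in> S then 1 else 0) * f v) = (\<Sum>v\<in>S. f v)"
proof -
  have "(\<Sum>v\<in>V. (if v \<in> S then 1 else 0) * f v) = (\<Sum>v\<in>V. if v \<in> S then f v else 0)"
    by (rule sum.cong) auto
  also have "\<dots> = (\<Sum>v\<in>V \<inter> S. f v)" using sum.inter_restrict[OF finV] by metis
  also have "V \<inter> S = S" using assms by blast
  finally show ?thesis .
qed

lemma cut_eq_by_bd:
  assumes "a \<in> qv.span Cut" "\<forall>z\<in>V. bd x z = bd a z"
  shows "PC x = a"
proof (rule C.R_eq[OF assms(1)])
  show "\<forall>y\<in>Cut. ip E a y = ip E x y"
  proof
    fix y assume "y \<in> Cut"
    then obtain f where "y = cb f" unfolding cut_lattice_def by blast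
    have "(\<Sum>v\<in>V. f v * bd a v) = (\<Sum>v\<in>V. f v * bd x v)"
      by (rule sum.cong) (use assms(2) in auto)
    then show "ip E a y = ip E x y" using \<open>y = cb f\<close> by (simp add: ip_cb)
  qed
qed

lemma indS_Cut:
  assumes "S \<subseteq> V" shows "cb (\<lambda>z. if z \<in> S then 1 else 0) \<in> Cut"
  unfolding cut_lattice_def zchains_def
proof (intro CollectI conjI exI allI ballI impI)
  fix e assume "e \<in> E"
  then show "cb (\<lambda>z. if z \<in> S then 1 else 0) e \<in> \<int>" by (simp add: cobdry_def)
next
  fix e assume "e \<notin> E"
  then show "cb (\<lambda>z. if z \<in> S then 1 else 0) e = 0" by (simp add: cobdry_def)
next
  fix v assume "v \<notin> V"
  then show "(if v \<in> S then 1 else 0) = (0::rat)" using assms by auto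
qed simp

lemma cut_short_surj:
  assumes xi: "\<xi> \<in> short_cov E Cut"
  shows "\<exists>\<chi>. pm1 E \<chi> \<and> PC \<chi> = \<xi>"
proof -
  have xc: "\<xi> \<in> char_cov E Cut" using xi unfolding short_cov_def by blast
  have xs: "\<xi> \<in> qv.span Cut" using xc unfolding char_cov_def dual_lat_def qspan_eq by blast
  have xp: "\<forall>z\<in>Cut. \<exists>k::int. ip E \<xi> z - ip E z z = 2 * of_int k"
    using xc unfolding char_cov_def by blast
  define b where "b z = bd \<xi> z" for z
  have par: "evenq (bd \<chi> z - b z)" if pm: "pm1 E \<chi>" and zV: "z \<in> V" for \<chi> z
  proof -
    define y where "y = cb (ind z)"
    have yC: "y \<in> Cut" unfolding y_def using ind_cb_Cut[OF zV] .
    have "evenq (ip E \<chi> y - ip E y y)"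
      using oddv_char_parity[OF pm1_oddv[OF pm]] yC Cut_props(4) by blast
    moreover have "evenq (ip E \<xi> y - ip E y y)" using xp yC unfolding evenq_def by blast
    ultimately have "evenq ((ip E \<chi> y - ip E y y) - (ip E \<xi> y - ip E y y))" by (rule evenq_diff)
    moreover have "bd \<chi> z - b z = (ip E \<chi> y - ip E y y) - (ip E \<xi> y - ip E y y)"
      unfolding y_def b_def bd_ind[OF zV] by simp
    ultimately show ?thesis by simp
  qed
  have sumb: "(\<Sum>z\<in>V. b z) = 0" unfolding b_def by (rule sum_bd)
  have short: "0 \<le> (\<Sum>z\<in>S. b z) + ip E (cb (\<lambda>z. if z \<in> S then 1 else 0)) (cb (\<lambda>z. if z \<in> S then 1 else 0))"
    if SV: "S \<subseteq> V" for S
  proof -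
    define y where "y = cb (\<lambda>z. if z \<in> S then 1 else (0::rat))"
    have yC: "y \<in> Cut" unfolding y_def using indS_Cut[OF SV] .
    have "(\<lambda>e. \<xi> e + 2 * y e) \<in> char_class Cut \<xi>" unfolding char_class_def using yC by blast
    then have "ip E \<xi> \<xi> \<le> ip E (\<lambda>e. \<xi> e + 2 * y e) (\<lambda>e. \<xi> e + 2 * y e)"
      using xi unfolding short_cov_def by blast
    then have "0 \<le> ip E \<xi> y + ip E y y" unfolding C.class_norm by simp
    moreover have "ip E \<xi> y = (\<Sum>z\<in>S. b z)"
      unfolding y_def ip_cb b_def using sum_indicator_V[OF SV, of "bd \<xi>"] by simp
    ultimately show ?thesis unfolding y_def by simp
  qed
  obtain \<chi> where \<chi>: "pm1 E \<chi>" "\<forall>z\<in>V. bd \<chi> z = b z"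
    using hakimi[OF par sumb short] by blast
  have "PC \<chi> = \<xi>" using cut_eq_by_bd[OF xs] \<chi>(2) unfolding b_def by blast
  then show ?thesis using \<chi>(1) by blast
qed

lemma cut_dual_surj:
  assumes eta: "\<eta> \<in> dual_lat E Cut"
  shows "\<exists>z\<in>zchains E. PC z = \<eta>"
proof -
  have c1: "PC C.one \<in> char_cov E Cut" using C.R_char[OF pm1_oddv[OF C.one_pm1]] .
  have c2: "PC C.one + sc 2 \<eta> \<in> char_cov E Cut" using C.char_dual_add[OF c1 eta] .
  obtain s where s: "s \<in> char_class Cut (PC C.one + sc 2 \<eta>)" "s \<in> short_cov E Cut"
    using C.short_exists[OF c2] by blast
  obtain y where y: "y \<in> Cut" "s = (\<lambda>e. (PC C.one + sc 2 \<eta>) e + 2 * y e)"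
    using s(1) unfolding char_class_def by blast
  obtain \<chi> where \<chi>: "pm1 E \<chi>" "PC \<chi> = s" using cut_short_surj[OF s(2)] by blast
  define z where "z = sc (1/2) (\<chi> - C.one) - y"
  have "sc (1/2) (\<chi> - C.one) \<in> zchains E"
    using half_diff_odd[OF pm1_oddv[OF \<chi>(1)] pm1_oddv[OF C.one_pm1]] .
  then have zz: "z \<in> zchains E" unfolding z_def using zchains_diff y(1) Cut_props(4) by blast
  have Py: "PC y = y" using C.R_id qv.span_base[OF y(1)] by blast
  have "PC z = sc (1/2) (PC \<chi> - PC C.one) - y" unfolding z_def C.R_diff C.R_sc Py ..
  also have "\<dots> = \<eta>" unfolding \<chi>(2) y(2) by (rule ext) (simp add: field_simps)
  finally show ?thesis using zz by blast
qed

end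




context gr
begin

inductive walkv :: "'v \<Rightarrow> 'v \<Rightarrow> ('e \<Rightarrow> rat) \<Rightarrow> bool" where
  w0: "walkv u u (\<lambda>x. 0)"
| fwd: "walkv u a w \<Longrightarrow> e \<in> E \<Longrightarrow> src e = a \<Longrightarrow> walkv u (tgt e) (\<lambda>x. w x + uvec e x)"
| bwd: "walkv u a w \<Longrightarrow> e \<in> E \<Longrightarrow> tgt e = a \<Longrightarrow> walkv u (src e) (\<lambda>x. w x - uvec e x)"

lemma w0': "walkv u u 0" using w0 by (simp add: zero_fun_def)
lemma fwd': "walkv u a w \<Longrightarrow> e \<in> E \<Longrightarrow> src e = a \<Longrightarrow> walkv u (tgt e) (w + uvec e)"
  using fwd by (simp add: plus_fun_def)
lemma bwd': "walkv u a w \<Longrightarrow> e \<in> E \<Longrightarrow> tgt e = a \<Longrightarrow> walkv u (src e) (w - uvec e)"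
  using bwd by (simp add: fun_diff_def)

lemma uvec_z: "e \<in> E \<Longrightarrow> uvec e \<in> zchains E"
  unfolding uvec_def zchains_def by auto

lemma walkv_z: "walkv u v w \<Longrightarrow> w \<in> zchains E"
proof (induction rule: walkv.induct)
  case (w0 u) then show ?case using zchains_0 by (simp add: zero_fun_def)
next
  case (fwd u a w e) then show ?case using zchains_add[OF _ uvec_z] by (simp add: plus_fun_def)
next
  case (bwd u a w e) then show ?case using zchains_diff[OF _ uvec_z] by (simp add: fun_diff_def)
qed

lemma bd_uvec: assumes "e \<in> E" shows "bd (uvec e) z = ce e z"
proof -
  have "bd (uvec e) z = (\<Sum>e'\<in>E. uvec e e' * ce e' z)" by (rule bd_ce)
  also have "\<dots> = (\<Sum>e'\<in>E. if e' = e then ce e' z else 0)" by (rule sum.cong) (auto simp: uvec_def)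
  also have "\<dots> = ce e z" using assms finE by simp
  finally show ?thesis .
qed

lemma bd_diff: "bd (x - y) v = bd x v - bd y v"
  using bd_add[of x "- y" v] bd_neg[of y v] by simp

lemma walkv_bd: "walkv u v w \<Longrightarrow> bd w z = ind v z - ind u z"
proof (induction rule: walkv.induct)
  case (w0 u) then show ?case using bd_zero by (simp add: zero_fun_def)
next
  case (fwd u a w e)
  have "bd (w + uvec e) z = ind (tgt e) z - ind u z"
    using fwd by (auto simp: bd_add bd_uvec ce_def ind_def)
  then show ?case by (simp add: plus_fun_def)
next
  case (bwd u a w e)
  have "bd (w - uvec e) z = ind (src e) z - ind u z"
    using bwd by (auto simp: bd_diff bd_uvec ce_def ind_def)
  then show ?case by (simp add: fun_diff_def)
qed

lemma walkv_trans: "walkv v x w2 \<Longrightarrow> walkv u v w1 \<Longrightarrow> walkv u x (w1 + w2)"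
proof (induction rule: walkv.induct)
  case (w0 u) then show ?case by (simp add: zero_fun_def plus_fun_def)
next
  case (fwd v a w e)
  then have "walkv u (tgt e) ((w1 + w) + uvec e)" by (intro fwd') (auto simp: plus_fun_def)
  then show ?case by (simp add: plus_fun_def add.assoc)
next
  case (bwd v a w e)
  then have "walkv u (src e) ((w1 + w) - uvec e)" by (intro bwd') (auto simp: plus_fun_def)
  then show ?case by (simp add: plus_fun_def fun_diff_def algebra_simps)
qed

lemma walkv_sym: "walkv u v w \<Longrightarrow> walkv v u (- w)"
proof (induction rule: walkv.induct)
  case (w0 u) then show ?case using w0' by (simp add: zero_fun_def fun_Compl_def)
next
  case (fwd u a w e)
  have "walkv (tgt e) (src e) (0 - uvec e)" using bwd'[OF w0' fwd.hyps(2)] by simp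
  from walkv_trans[OF fwd.IH this[unfolded fwd.hyps(3)]] show ?case
    by (simp add: plus_fun_def fun_Compl_def fun_diff_def algebra_simps)
next
  case (bwd u a w e)
  have "walkv (src e) (tgt e) (0 + uvec e)" using fwd'[OF w0' bwd.hyps(2)] by simp
  from walkv_trans[OF bwd.IH this[unfolded bwd.hyps(3)]] show ?case
    by (simp add: plus_fun_def fun_Compl_def fun_diff_def algebra_simps)
qed

definition R :: "'v \<Rightarrow> 'v \<Rightarrow> bool" where "R u v \<longleftrightarrow> (\<exists>w. walkv u v w)"

definition rt :: "'v \<Rightarrow> 'v" where "rt v = (SOME u. R v u)"

lemma R_refl: "R v v" unfolding R_def using w0' by blast
lemma R_sym: "R u v \<Longrightarrow> R v u" unfolding R_def using walkv_sym by blast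
lemma R_trans: "R u v \<Longrightarrow> R v x \<Longrightarrow> R u x" unfolding R_def using walkv_trans by blast

lemma R_rt: "R v (rt v)" unfolding rt_def using someI[of "R v", OF R_refl] .

lemma rt_eq: assumes "R u v" shows "rt u = rt v"
proof -
  have "{x. R u x} = {x. R v x}" using assms R_sym R_trans by blast
  then have "(\<lambda>x. R u x) = (\<lambda>x. R v x)" by (simp add: fun_eq_iff) (metis mem_Collect_eq)
  then show ?thesis unfolding rt_def by simp
qed

definition wv :: "'v \<Rightarrow> 'e \<Rightarrow> rat" where "wv v = (SOME w. walkv (rt v) v w)"

lemma wv_walk: "walkv (rt v) v (wv v)"
proof -
  have "R (rt v) v" using R_sym[OF R_rt] .
  then show ?thesis unfolding wv_def R_def by (rule someI_ex)
qed

lemma ip_uvec: "e \<in> E \<Longrightarrow> ip E x (uvec e) = x e"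
proof -
  assume e: "e \<in> E"
  have "ip E x (uvec e) = (\<Sum>e'\<in>E. if e' = e then x e' else 0)"
    unfolding ip_def by (rule sum.cong) (auto simp: uvec_def)
  also have "\<dots> = x e" using e finE by simp
  finally show ?thesis .
qed

lemma flow_dual_surj:
  assumes eta: "\<eta> \<in> dual_lat E Flow"
  shows "\<exists>z\<in>zchains E. PF z = \<eta>"
proof -
  have es: "\<eta> \<in> qv.span Flow" and eint: "\<forall>y\<in>Flow. ip E \<eta> y \<in> \<int>"
    using eta unfolding dual_lat_def qspan_eq by auto
  have esupp: "\<eta> \<in> supp E" using es F.spanL_supp by blast
  define h where "h v = (if v \<in> V then - ip E \<eta> (wv v) else 0)" for v
  have PFh: "PF (cb h) = 0" by (rule PF_CS) (auto simp: CS_def h_def)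
  define z where "z = \<eta> + cb h"
  have "z e \<in> \<int>" if e: "e \<in> E" for e
  proof -
    define s where "s = src e"
    define t where "t = tgt e"
    have sV: "s \<in> V" and tV: "t \<in> V" unfolding s_def t_def using e ends by auto
    have "walkv s t (0 + uvec e)" unfolding s_def t_def by (rule fwd'[OF w0' e]) simp
    then have "R s t" unfolding R_def by blast
    then have rst: "rt s = rt t" by (rule rt_eq)
    have wt: "walkv (rt t) t (wv t)" by (rule wv_walk)
    have ws: "walkv (rt t) t (wv s + uvec e)"
      using fwd'[OF wv_walk[of s] e] rst unfolding s_def t_def by simp
    define y where "y = wv t - (wv s + uvec e)"
    have yz: "y \<in> zchains E" unfolding y_def
      using walkv_z[OF wt] walkv_z[OF ws] zchains_diff by blast
    have "bd y v = 0" for v unfolding y_def bd_diff walkv_bd[OF wt] walkv_bd[OF ws] by simp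
    then have yF: "y \<in> Flow" using yz unfolding flow_lattice_def by blast
    have "z e = \<eta> e + h t - h s" unfolding z_def t_def s_def using e by (simp add: cobdry_def)
    also have "\<dots> = \<eta> e - ip E \<eta> (wv t) + ip E \<eta> (wv s)" using sV tV unfolding h_def by simp
    also have "\<dots> = - ip E \<eta> y"
      unfolding y_def ip_diff2 ip_add2 ip_uvec[OF e] by simp
    finally show ?thesis using eint yF by simp
  qed
  moreover have "z e = 0" if "e \<notin> E" for e
    using that esupp unfolding z_def supp_def by (simp add: cobdry_def)
  ultimately have zz: "z \<in> zchains E" unfolding zchains_def by blast
  have "PF z = \<eta>" unfolding z_def F.R_add F.R_id[OF es] PFh by simp
  then show ?thesis using zz by blast
qed

end




context gr
begin

sublocale Z: plat E "zchains E"
proof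
  show "finite E" by (rule finE)
  show "zchains E \<subseteq> zchains E" "0 \<in> zchains E" using zchains_0 by auto
  show "x + y \<in> zchains E" if "x \<in> zchains E" "y \<in> zchains E" for x y using zchains_add that by blast
  show "- x \<in> zchains E" if "x \<in> zchains E" for x using zchains_neg that by blast
  show "\<exists>r\<in>qv.span (zchains E). \<forall>y\<in>zchains E. ip E r y = ip E x y" for x
  proof (rule bexI[of _ "trunc x"])
    have "uvec ` E \<subseteq> zchains E" using uvec_z by blast
    then have "qv.span (uvec ` E) \<subseteq> qv.span (zchains E)" by (rule qv.span_mono)
    then show "trunc x \<in> qv.span (zchains E)" using supp_span_units[OF finE] trunc_supp by blast
    show "\<forall>y\<in>zchains E. ip E (trunc x) y = ip E x y" using ip_trunc by blast
  qed
qed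

lemma supp_span_z: "supp E \<subseteq> qv.span (zchains E)"
proof -
  have "uvec ` E \<subseteq> zchains E" using uvec_z by blast
  then have "qv.span (uvec ` E) \<subseteq> qv.span (zchains E)" by (rule qv.span_mono)
  then show ?thesis using supp_span_units[OF finE] by blast
qed

lemma Z_R_id: "x \<in> supp E \<Longrightarrow> restr E (zchains E) x = x"
  using Z.R_id supp_span_z by blast

lemma uvec_norm: "e \<in> E \<Longrightarrow> ip E (uvec e) (uvec e) = 1"
  using ip_uvec[of e "uvec e"] by (simp add: uvec_def)

lemma Z_char: "char_cov E (zchains E) = {x. oddv E x}"
proof (intro equalityI subsetI)
  fix x assume x: "x \<in> char_cov E (zchains E)"
  have xs: "x \<in> supp E" using x Z.spanL_supp unfolding char_cov_def dual_lat_def qspan_eq by blast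
  have "\<exists>k::int. x e = 2 * of_int k + 1" if e: "e \<in> E" for e
  proof -
    obtain k :: int where k: "ip E x (uvec e) - ip E (uvec e) (uvec e) = 2 * of_int k"
      using x uvec_z[OF e] unfolding char_cov_def by blast
    then have "x e = 2 * of_int k + 1" using ip_uvec[OF e] uvec_norm[OF e] by simp
    then show ?thesis by blast
  qed
  then show "x \<in> {x. oddv E x}" using xs unfolding oddv_def by blast
next
  fix x assume "x \<in> {x. oddv E x}"
  then have o: "oddv E x" by simp
  then have "x \<in> supp E" unfolding oddv_def by blast
  then show "x \<in> char_cov E (zchains E)" using Z.R_char[OF o] Z_R_id by simp
qed

lemma sq_big: fixes t :: rat assumes "5 \<le> t * t" shows "t \<ge> 2 \<or> t \<le> -2"
proof (rule ccontr)
  assume "\<not> (t \<ge> 2 \<or> t \<le> -2)"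
  then have a: "\<bar>t\<bar> < 2" by auto
  have "\<bar>t\<bar> * \<bar>t\<bar> < 2 * 2" by (rule mult_strict_mono[OF a a]) auto
  then have "t * t < 4" by (simp add: abs_mult[symmetric])
  then show False using assms by simp
qed

lemma Z_short: "short_cov E (zchains E) = {x. pm1 E x}"
proof (intro equalityI subsetI)
  fix x assume x: "x \<in> short_cov E (zchains E)"
  then have o: "oddv E x" using Z_char unfolding short_cov_def by blast
  show "x \<in> {x. pm1 E x}"
  proof (rule ccontr)
    assume np: "x \<notin> {x. pm1 E x}"
    then obtain e0 where e0: "e0 \<in> E" "x e0 \<noteq> 1" "x e0 \<noteq> -1"
      using o unfolding pm1_def oddv_def by blast
    obtain k where k: "x e0 = 2 * of_int k + 1" using o e0(1) unfolding oddv_def by blast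
    have big: "5 \<le> x e0 * x e0" using C.odd_sq[OF k] e0 by blast
    define s :: rat where "s = (if x e0 > 0 then -1 else 1)"
    define y where "y = sc s (uvec e0)"
    have yz: "y \<in> zchains E" unfolding y_def using uvec_z[OF e0(1)]
      by (auto simp: zchains_def s_def)
    have "ip E x y + ip E y y = s * x e0 + s * s"
    proof -
      have "uvec e0 e0 = 1" by (simp add: uvec_def)
      then show ?thesis unfolding y_def ip_sc1 ip_sc2 ip_uvec[OF e0(1)] uvec_norm[OF e0(1)] by simp
    qed
    also have "\<dots> < 0"
      using sq_big[OF big] unfolding s_def by auto
    finally have neg: "ip E x y + ip E y y < 0" .
    have "(\<lambda>e. x e + 2 * y e) \<in> char_class (zchains E) x" unfolding char_class_def using yz by blast
    then have "ip E x x \<le> ip E (\<lambda>e. x e + 2 * y e) (\<lambda>e. x e + 2 * y e)"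
      using x unfolding short_cov_def by blast
    then show False unfolding Z.class_norm using neg by simp
  qed
next
  fix x assume "x \<in> {x. pm1 E x}"
  then have p: "pm1 E x" by simp
  then have "x \<in> supp E" unfolding pm1_def by blast
  then show "x \<in> short_cov E (zchains E)" using Z.R_short[OF p] Z_R_id by simp
qed

lemma oddv_shift: assumes "oddv E x" "c \<in> zchains E" shows "oddv E (x + sc 2 c)"
  unfolding oddv_def
proof (intro conjI ballI)
  show "x + sc 2 c \<in> supp E" using assms unfolding oddv_def zchains_def supp_def by simp
next
  fix e assume e: "e \<in> E"
  obtain k where k: "x e = 2 * of_int k + 1" using assms(1) e unfolding oddv_def by blast
  have "c e \<in> \<int>" using assms(2) e unfolding zchains_def by blast
  then obtain m where m: "c e = of_int m" by (auto elim: Ints_cases)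
  have "(x + sc 2 c) e = 2 * of_int (k + m) + 1" using k m by simp
  then show "\<exists>k::int. (x + sc 2 c) e = 2 * of_int k + 1" by blast
qed

lemma flow_short_surj:
  assumes xi: "\<xi> \<in> short_cov E Flow"
  shows "\<exists>\<chi>. pm1 E \<chi> \<and> PF \<chi> = \<xi>"
proof -
  have xc: "\<xi> \<in> char_cov E Flow" using xi unfolding short_cov_def by blast
  obtain x where x: "oddv E x" "PF x = \<xi>" using F.char_surj_from_dual[OF flow_dual_surj xc] by blast
  have xz: "x \<in> zchains E" using oddv_zchains[OF x(1)] .
  obtain s where s: "s \<in> char_class Cut (PC x)" "s \<in> short_cov E Cut"
    using C.short_exists[OF C.R_char[OF x(1)]] by blast
  obtain c where c: "c \<in> Cut" "s = (\<lambda>e. PC x e + 2 * c e)" using s(1) unfolding char_class_def by blast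
  obtain \<chi> where \<chi>: "pm1 E \<chi>" "PC \<chi> = s" using cut_short_surj[OF s(2)] by blast
  define x' where "x' = x + sc 2 c"
  have cz: "c \<in> zchains E" using c(1) Cut_props(4) by blast
  have ox': "oddv E x'" unfolding x'_def using oddv_shift[OF x(1) cz] .
  have PCc: "PC c = c" using C.R_id qv.span_base[OF c(1)] by blast
  have PFc: "PF c = 0" using PF_CS Cut_CS c(1) by blast
  have PCx': "PC x' = PC \<chi>" unfolding x'_def C.R_add C.R_sc PCc \<chi>(2) c(2) by (rule ext) simp
  have PFx': "PF x' = \<xi>" unfolding x'_def F.R_add F.R_sc PFc x(2) by (rule ext) simp
  have "char_class Flow (PF \<chi>) = char_class Flow (PF x')"
    using class_WD[OF pm1_oddv[OF \<chi>(1)] ox'] PCx' by simp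
  then have cl: "char_class Flow (PF \<chi>) = char_class Flow \<xi>" using PFx' by simp
  have sh: "PF \<chi> \<in> short_cov E Flow" using F.R_short[OF \<chi>(1)] .
  have "ip E \<xi> \<xi> \<le> ip E (PF \<chi>) (PF \<chi>)"
    using xi F.class_mem[of "PF \<chi>"] cl unfolding short_cov_def by blast
  moreover have "ip E (PF \<chi>) (PF \<chi>) \<le> ip E \<xi> \<xi>"
    using sh F.class_mem[of \<xi>] cl unfolding short_cov_def by blast
  ultimately have eqn: "ip E \<xi> \<xi> = ip E (PF \<chi>) (PF \<chi>)" by simp
  have x's: "x' \<in> supp E" using ox' unfolding oddv_def by blast
  have \<chi>s: "\<chi> \<in> supp E" using \<chi>(1) unfolding pm1_def by blast
  have "ip E x' x' = ip E \<chi> \<chi>"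
    using norm_split[OF x's] norm_split[OF \<chi>s] PCx' PFx' eqn by simp
  also have "\<dots> = of_nat (card E)" using C.pm1_norm[OF \<chi>(1)] .
  finally have "pm1 E x'" using C.odd_norm_pm1[OF ox'] by simp
  then show ?thesis using PFx' by blast
qed

end




context plat
begin

lemma dcoset_mult:
  "monoid.mult (disc_group E L) (dcoset L a) (dcoset L b) = dcoset L (\<lambda>e. a e + b e)"
proof (intro equalityI subsetI)
  fix x assume "x \<in> monoid.mult (disc_group E L) (dcoset L a) (dcoset L b)"
  then obtain p q where pq: "p \<in> dcoset L a" "q \<in> dcoset L b" "x = (\<lambda>e. p e + q e)"
    unfolding disc_group_def by auto
  obtain y where y: "y \<in> L" "p = (\<lambda>e. a e + y e)" using pq(1) unfolding dcoset_def by blast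
  obtain y' where y': "y' \<in> L" "q = (\<lambda>e. b e + y' e)" using pq(2) unfolding dcoset_def by blast
  have "x = (\<lambda>e. (a e + b e) + (y + y') e)" using pq(3) y(2) y'(2) by (simp add: algebra_simps)
  moreover have "y + y' \<in> L" using Ladd[OF y(1) y'(1)] .
  ultimately show "x \<in> dcoset L (\<lambda>e. a e + b e)" unfolding dcoset_def by blast
next
  fix x assume "x \<in> dcoset L (\<lambda>e. a e + b e)"
  then obtain y where y: "y \<in> L" "x = (\<lambda>e. (a e + b e) + y e)" unfolding dcoset_def by blast
  have "(\<lambda>e. a e + y e) \<in> dcoset L a" unfolding dcoset_def using y(1) by blast
  moreover have "b \<in> dcoset L b" by (rule dcoset_mem)
  moreover have "x = (\<lambda>e. (\<lambda>e. a e + y e) e + b e)" using y(2) by (simp add: algebra_simps)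
  ultimately show "x \<in> monoid.mult (disc_group E L) (dcoset L a) (dcoset L b)"
    unfolding disc_group_def by auto
qed

lemma class_elem_char:
  assumes "\<xi> \<in> char_cov E L" "a \<in> char_class L \<xi>" shows "a \<in> char_cov E L"
  using assms class_char unfolding char_class_def by blast

end

context gr
begin

lemma carrierC: "carrier (disc_group E Cut) = (\<lambda>x. dcoset Cut (PC x)) ` zchains E"
  unfolding disc_group_def using cut_dual_surj C.R_dual by force

lemma carrierF: "carrier (disc_group E Flow) = (\<lambda>x. dcoset Flow (PF x)) ` zchains E"
  unfolding disc_group_def using flow_dual_surj F.R_dual by force

lemma classesC: "char_classes E Cut = (\<lambda>x. char_class Cut (PC x)) ` {x. oddv E x}"
  unfolding char_classes_def using C.char_surj_from_dual[OF cut_dual_surj] C.R_char by force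

lemma classesF: "char_classes E Flow = (\<lambda>x. char_class Flow (PF x)) ` {x. oddv E x}"
  unfolding char_classes_def using F.char_surj_from_dual[OF flow_dual_surj] F.R_char by force

definition psi :: "('e \<Rightarrow> rat) set \<Rightarrow> ('e \<Rightarrow> rat) set" where
  "psi A = dcoset Flow (PF (SOME x. x \<in> zchains E \<and> dcoset Cut (PC x) = A))"

lemma psi_eq: assumes "x \<in> zchains E" shows "psi (dcoset Cut (PC x)) = dcoset Flow (PF x)"
proof -
  define x' where "x' = (SOME x'. x' \<in> zchains E \<and> dcoset Cut (PC x') = dcoset Cut (PC x))"
  have "x' \<in> zchains E \<and> dcoset Cut (PC x') = dcoset Cut (PC x)"
    unfolding x'_def by (rule someI[of _ x]) (use assms in simp)
  then show ?thesis unfolding psi_def x'_def[symmetric] using dcoset_WD assms by blast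
qed

definition phi :: "('e \<Rightarrow> rat) set \<Rightarrow> ('e \<Rightarrow> rat) set" where
  "phi c = char_class Flow (PF (SOME x. oddv E x \<and> char_class Cut (PC x) = c))"

lemma phi_eq: assumes "oddv E x" shows "phi (char_class Cut (PC x)) = char_class Flow (PF x)"
proof -
  define x' where "x' = (SOME x'. oddv E x' \<and> char_class Cut (PC x') = char_class Cut (PC x))"
  have "oddv E x' \<and> char_class Cut (PC x') = char_class Cut (PC x)"
    unfolding x'_def by (rule someI[of _ x]) (use assms in simp)
  then show ?thesis unfolding phi_def x'_def[symmetric] using class_WD assms by blast
qed

lemma psi_iso: "psi \<in> iso (disc_group E Cut) (disc_group E Flow)"
proof -
  have maps: "psi \<in> carrier (disc_group E Cut) \<rightarrow> carrier (disc_group E Flow)"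
    unfolding carrierC carrierF using psi_eq by auto
  have mult: "psi (monoid.mult (disc_group E Cut) A B) =
      monoid.mult (disc_group E Flow) (psi A) (psi B)"
    if AB: "A \<in> carrier (disc_group E Cut)" "B \<in> carrier (disc_group E Cut)" for A B
  proof -
    obtain x where x: "x \<in> zchains E" "A = dcoset Cut (PC x)" using AB(1) unfolding carrierC by blast
    obtain y where y: "y \<in> zchains E" "B = dcoset Cut (PC y)" using AB(2) unfolding carrierC by blast
    have xy: "x + y \<in> zchains E" using zchains_add[OF x(1) y(1)] .
    have "monoid.mult (disc_group E Cut) A B = dcoset Cut (PC (x + y))"
      unfolding x(2) y(2) C.dcoset_mult C.R_add by (simp add: plus_fun_def)
    then have "psi (monoid.mult (disc_group E Cut) A B) = dcoset Flow (PF (x + y))"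
      using psi_eq[OF xy] by simp
    also have "\<dots> = monoid.mult (disc_group E Flow) (dcoset Flow (PF x)) (dcoset Flow (PF y))"
      unfolding F.dcoset_mult F.R_add by (simp add: plus_fun_def)
    finally show ?thesis unfolding x(2) y(2) psi_eq[OF x(1)] psi_eq[OF y(1)] .
  qed
  have inj: "inj_on psi (carrier (disc_group E Cut))"
  proof (rule inj_onI)
    fix A B assume A: "A \<in> carrier (disc_group E Cut)" and B: "B \<in> carrier (disc_group E Cut)"
      and eq: "psi A = psi B"
    obtain x where x: "x \<in> zchains E" "A = dcoset Cut (PC x)" using A unfolding carrierC by blast
    obtain y where y: "y \<in> zchains E" "B = dcoset Cut (PC y)" using B unfolding carrierC by blast
    have "dcoset Flow (PF x) = dcoset Flow (PF y)" using eq psi_eq x y by simp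
    then show "A = B" using dcoset_WD'[OF x(1) y(1)] x y by simp
  qed
  have surj: "psi ` carrier (disc_group E Cut) = carrier (disc_group E Flow)"
    unfolding carrierC carrierF using psi_eq by (auto simp: image_iff)
  show ?thesis unfolding iso_def hom_def bij_betw_def
    using maps mult inj surj by blast
qed

lemma phi_bij: "bij_betw phi (char_classes E Cut) (char_classes E Flow)"
  unfolding bij_betw_def
proof
  show "inj_on phi (char_classes E Cut)"
  proof (rule inj_onI)
    fix A B assume A: "A \<in> char_classes E Cut" and B: "B \<in> char_classes E Cut" and eq: "phi A = phi B"
    obtain x where x: "oddv E x" "A = char_class Cut (PC x)" using A unfolding classesC by blast
    obtain y where y: "oddv E y" "B = char_class Cut (PC y)" using B unfolding classesC by blast
    have "char_class Flow (PF x) = char_class Flow (PF y)" using eq phi_eq x y by simp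
    then show "A = B" using class_WD'[OF x(1) y(1)] x y by simp
  qed
  show "phi ` char_classes E Cut = char_classes E Flow"
    unfolding classesC classesF using phi_eq by (auto simp: image_iff)
qed

end




context plat
begin

lemma some_in_class:
  assumes "c \<in> char_classes E L"
  shows "(SOME \<chi>. \<chi> \<in> c) \<in> char_cov E L \<and> char_class L (SOME \<chi>. \<chi> \<in> c) = c"
proof -
  obtain \<xi> where xi: "\<xi> \<in> char_cov E L" "c = char_class L \<xi>"
    using assms unfolding char_classes_def by blast
  have "\<xi> \<in> c" using xi(2) class_mem by simp
  then have a: "(SOME \<chi>. \<chi> \<in> c) \<in> c" by (rule someI[of "\<lambda>\<chi>. \<chi> \<in> c"])
  then have "(SOME \<chi>. \<chi> \<in> c) \<in> char_cov E L" using class_elem_char xi by blast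
  moreover have "char_class L (SOME \<chi>. \<chi> \<in> c) = c" using class_mem_eq a xi(2) by simp
  ultimately show ?thesis by blast
qed

end

context gr
begin

lemma cut_class_rep:
  assumes "c \<in> char_classes E Cut"
  obtains x where "oddv E x" "PC x = (SOME \<chi>. \<chi> \<in> c)" "c = char_class Cut (PC x)"
proof -
  have s: "(SOME \<chi>. \<chi> \<in> c) \<in> char_cov E Cut" "char_class Cut (SOME \<chi>. \<chi> \<in> c) = c"
    using C.some_in_class[OF assms] by blast+
  obtain x where "oddv E x" "PC x = (SOME \<chi>. \<chi> \<in> c)"
    using C.char_surj_from_dual[OF cut_dual_surj s(1)] by blast
  then show ?thesis using that s(2) by simp
qed

lemma flow_class_rep:
  assumes "c \<in> char_classes E Flow"
  obtains x where "oddv E x" "PF x = (SOME \<chi>. \<chi> \<in> c)" "c = char_class Flow (PF x)"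
proof -
  have s: "(SOME \<chi>. \<chi> \<in> c) \<in> char_cov E Flow" "char_class Flow (SOME \<chi>. \<chi> \<in> c) = c"
    using F.some_in_class[OF assms] by blast+
  obtain x where "oddv E x" "PF x = (SOME \<chi>. \<chi> \<in> c)"
    using F.char_surj_from_dual[OF flow_dual_surj s(1)] by blast
  then show ?thesis using that s(2) by simp
qed

lemma phi_dinv:
  assumes c: "c \<in> char_classes E Cut"
  shows "- dinv E Flow (phi c) = dinv E Cut c"
proof -
  obtain \<xi> where xi: "\<xi> \<in> char_cov E Cut" "c = char_class Cut \<xi>"
    using c unfolding char_classes_def by blast
  obtain s where s: "s \<in> char_class Cut \<xi>" "s \<in> short_cov E Cut" using C.short_exists[OF xi(1)] by blast
  have cs: "char_class Cut s = c" using C.class_mem_eq[OF s(1)] xi(2) by simp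
  obtain \<chi> where \<chi>: "pm1 E \<chi>" "PC \<chi> = s" using cut_short_surj[OF s(2)] by blast
  have pc: "phi c = char_class Flow (PF \<chi>)" using phi_eq[OF pm1_oddv[OF \<chi>(1)]] cs \<chi>(2) by simp
  have d1: "dinv E Cut c = (real_of_rat (ip E s s) - real (lat_rank Cut)) / 4"
    using C.dinv_short[OF s(2)] cs by simp
  have d2: "dinv E Flow (phi c) = (real_of_rat (ip E (PF \<chi>) (PF \<chi>)) - real (lat_rank Flow)) / 4"
    using F.dinv_short[OF F.R_short[OF \<chi>(1)]] pc by simp
  have \<chi>s: "\<chi> \<in> supp E" using \<chi>(1) unfolding pm1_def by blast
  have "ip E s s + ip E (PF \<chi>) (PF \<chi>) = of_nat (card E)"
    using norm_split[OF \<chi>s] C.pm1_norm[OF \<chi>(1)] \<chi>(2) by simp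
  then have "real_of_rat (ip E s s) + real_of_rat (ip E (PF \<chi>) (PF \<chi>)) = real (card E)"
    by (metis of_rat_add of_rat_of_nat_eq)
  moreover have "real (lat_rank Cut) + real (lat_rank Flow) = real (card E)"
    using rank_sum by (metis of_nat_add)
  ultimately show ?thesis unfolding d1 d2 by (simp add: field_simps)
qed

lemma phi_tdiff:
  assumes c: "c \<in> char_classes E Cut" and c': "c' \<in> char_classes E Cut"
  shows "tdiff Flow (phi c) (phi c') = psi (tdiff Cut c c')"
proof -
  obtain x where x: "oddv E x" "PC x = (SOME \<chi>. \<chi> \<in> c)" "c = char_class Cut (PC x)"
    using cut_class_rep[OF c] by blast
  obtain x' where x': "oddv E x'" "PC x' = (SOME \<chi>. \<chi> \<in> c')" "c' = char_class Cut (PC x')"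
    using cut_class_rep[OF c'] by blast
  define z where "z = sc (1/2) (x - x')"
  have zz: "z \<in> zchains E" unfolding z_def using half_diff_odd[OF x(1) x'(1)] .
  have "PC z = (\<lambda>e. ((SOME \<chi>. \<chi> \<in> c) e - (SOME \<chi>. \<chi> \<in> c') e) / 2)"
    unfolding z_def C.R_sc C.R_diff x(2) x'(2) by (rule ext) simp
  then have "tdiff Cut c c' = dcoset Cut (PC z)" unfolding tdiff_def by simp
  then have R: "psi (tdiff Cut c c') = dcoset Flow (PF z)" using psi_eq[OF zz] by simp
  have pc: "phi c = char_class Flow (PF x)" using phi_eq[OF x(1)] x(3) by simp
  have pc': "phi c' = char_class Flow (PF x')" using phi_eq[OF x'(1)] x'(3) by simp
  have pcF: "phi c \<in> char_classes E Flow" using phi_bij c unfolding bij_betw_def by blast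
  have pcF': "phi c' \<in> char_classes E Flow" using phi_bij c' unfolding bij_betw_def by blast
  obtain y where y: "oddv E y" "PF y = (SOME \<chi>. \<chi> \<in> phi c)" "phi c = char_class Flow (PF y)"
    using flow_class_rep[OF pcF] by blast
  obtain y' where y': "oddv E y'" "PF y' = (SOME \<chi>. \<chi> \<in> phi c')" "phi c' = char_class Flow (PF y')"
    using flow_class_rep[OF pcF'] by blast
  obtain f where f: "f \<in> Flow" "PF y = (\<lambda>e. PF x e + 2 * f e)"
    using F.class_eqD[of "PF y" "PF x"] y(3) pc by auto
  obtain f' where f': "f' \<in> Flow" "PF y' = (\<lambda>e. PF x' e + 2 * f' e)"
    using F.class_eqD[of "PF y'" "PF x'"] y'(3) pc' by auto
  have "tdiff Flow (phi c) (phi c') = dcoset Flow (\<lambda>e. (PF y e - PF y' e) / 2)"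
    unfolding tdiff_def y(2) y'(2) ..
  also have "(\<lambda>e. (PF y e - PF y' e) / 2) = (\<lambda>e. PF z e + (f - f') e)"
    unfolding f(2) f'(2) z_def F.R_sc F.R_diff by (rule ext) (simp add: field_simps)
  also have "dcoset Flow \<dots> = dcoset Flow (PF z)" using F.dcoset_shift F.Ldiff[OF f(1) f'(1)] by blast
  finally show ?thesis using R by simp
qed

end




theorem corollary3p4:
  fixes V :: "'v set" and E :: "'e set" and src tgt :: "'e \<Rightarrow> 'v"
  assumes "finite V" and "finite E"
    and "\<forall>e\<in>E. src e \<in> V \<and> tgt e \<in> V"
    and "\<forall>e\<in>E. src e \<noteq> tgt e"
  defines "Cut \<equiv> cut_lattice V E src tgt" and "Flow \<equiv> flow_lattice V E src tgt"
  shows "restr E Cut ` short_cov E (zchains E) = short_cov E Cut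
    \<and> restr E Flow ` short_cov E (zchains E) = short_cov E Flow
    \<and> (\<exists>\<phi> \<psi>.
           bij_betw \<phi> (char_classes E Cut) (char_classes E Flow)
         \<and> \<psi> \<in> iso (disc_group E Cut) (disc_group E Flow)
         \<and> (\<forall>c\<in>char_classes E Cut. - dinv E Flow (\<phi> c) = dinv E Cut c)
         \<and> (\<forall>c\<in>char_classes E Cut. \<forall>c'\<in>char_classes E Cut.
               tdiff Flow (\<phi> c) (\<phi> c') = \<psi> (tdiff Cut c c'))
         \<and> (\<forall>\<chi>\<in>char_cov E (zchains E).
               \<phi> (char_class Cut (restr E Cut \<chi>)) = char_class Flow (restr E Flow \<chi>))
         \<and> (\<forall>x\<in>zchains E.
               \<psi> (dcoset Cut (restr E Cut x)) = dcoset Flow (restr E Flow x)))"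
proof -
  interpret gr V E src tgt using assms(1-3) by unfold_locales
  have s1: "restr E (cut_lattice V E src tgt) ` short_cov E (zchains E) = short_cov E (cut_lattice V E src tgt)"
  proof
    show "restr E (cut_lattice V E src tgt) ` short_cov E (zchains E) \<subseteq> short_cov E (cut_lattice V E src tgt)"
      unfolding Z_short using C.R_short by auto
    show "short_cov E (cut_lattice V E src tgt) \<subseteq> restr E (cut_lattice V E src tgt) ` short_cov E (zchains E)"
      unfolding Z_short using cut_short_surj by force
  qed
  have s2: "restr E (flow_lattice V E src tgt) ` short_cov E (zchains E) = short_cov E (flow_lattice V E src tgt)"
  proof
    show "restr E (flow_lattice V E src tgt) ` short_cov E (zchains E) \<subseteq> short_cov E (flow_lattice V E src tgt)"
      unfolding Z_short using F.R_short by auto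
    show "short_cov E (flow_lattice V E src tgt) \<subseteq> restr E (flow_lattice V E src tgt) ` short_cov E (zchains E)"
      unfolding Z_short using flow_short_surj by force
  qed
  have s3: "\<forall>\<chi>\<in>char_cov E (zchains E). phi (char_class (cut_lattice V E src tgt) (restr E (cut_lattice V E src tgt) \<chi>))
      = char_class (flow_lattice V E src tgt) (restr E (flow_lattice V E src tgt) \<chi>)"
    unfolding Z_char using phi_eq by simp
  have s4: "\<forall>x\<in>zchains E. psi (dcoset (cut_lattice V E src tgt) (restr E (cut_lattice V E src tgt) x))
      = dcoset (flow_lattice V E src tgt) (restr E (flow_lattice V E src tgt) x)"
    using psi_eq by simp
  show ?thesis unfolding Cut_def Flow_def
    apply (rule conjI, fact s1, rule conjI, fact s2)
    apply (rule exI[of _ phi], rule exI[of _ psi])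
    apply (intro conjI)
         apply (fact phi_bij)
        apply (fact psi_iso)
    using phi_dinv apply blast
    using phi_tdiff apply blast
     apply (fact s3)
    apply (fact s4)
    done
qed



end
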